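(* Let $\mathcal K$ be a complex Hilbert space and $\mu$ a $\mathcal K$-Carleson measure. Then for every $x\in\mathbb R\setminus\{0\}$: $\mathcal R_\mu(-x)=\mathcal R_\mu(x)$, $\mathcal I_\mu(-x)=-\mathcal I_\mu(x)$, and $0\le\operatorname{sgn}(x)\mathcal I_\mu(x)$.
   Context: $\mathbb R_+=(0,\infty)$. $H^2(\mathbb C_+,\mathcal K)$ denotes the $\mathcal K$-valued Hardy space on the upper half plane. A $\mathcal K$-Carleson measure is a measure $\mu$ on $\mathbb R_+$ with values in the positive bounded operators on $\mathcal K$ such that $(f,g)\mapsto\int_{\mathbb R_+}\langle f(i\lambda),d\mu(\lambda)g(i\lambda)\rangle$ is a continuous sesquilinear form on $H^2(\mathbb C_+,\mathcal K)$. For $z\in\mathbb C\setminus i(-\infty,0]$, $\mathcal N_\mu(z)=\frac1\pi\int_{\mathbb R_+}\big(\frac1{\lambda-iz}-\frac\lambda{1+\lambda^2}\big)d\mu(\lambda)\in B(\mathcal K)$, $\mathcal R_\mu=\frac12(\mathcal N_\mu+\mathcal N_\mu^* )$, $\mathcal I_\mu=\frac1{2i}(\mathcal N_\mu-\mathcal N_\mu^* )$ (pointwise adjoints). *)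

theory Defs
  imports "HOL-Analysis.Analysis"
begin

class complex_vector = real_vector +
  fixes scaleC :: "complex \<Rightarrow> 'a \<Rightarrow> 'a"
  assumes scaleC_add_right: "scaleC c (x + y) = scaleC c x + scaleC c y"
    and scaleC_add_left: "scaleC (c + d) x = scaleC c x + scaleC d x"
    and scaleC_scaleC: "scaleC c (scaleC d x) = scaleC (c * d) x"
    and scaleC_one: "scaleC 1 x = x"
    and scaleR_scaleC: "scaleR r x = scaleC (complex_of_real r) x"

class chilbert_space = complex_vector + banach +
  fixes cinner :: "'a \<Rightarrow> 'a \<Rightarrow> complex"
  assumes cinner_commute: "cinner x y = cnj (cinner y x)"
    and cinner_add_left: "cinner (x + y) z = cinner x z + cinner y z"
    and cinner_scaleC_left: "cinner (scaleC c x) y = cnj c * cinner x y"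
    and cinner_ge_zero: "0 \<le> Re (cinner x x)"
    and cinner_eq_zero_iff: "cinner x x = 0 \<longleftrightarrow> x = 0"
    and norm_eq_sqrt_cinner: "norm x = sqrt (Re (cinner x x))"

definition bounded_clinear_op :: "('a::chilbert_space \<Rightarrow> 'a) \<Rightarrow> bool" where
  "bounded_clinear_op T \<longleftrightarrow> bounded_linear T \<and> (\<forall>c x. T (scaleC c x) = scaleC c (T x))"

definition op_nonneg :: "('a::chilbert_space \<Rightarrow> 'a) \<Rightarrow> bool" where
  "op_nonneg T \<longleftrightarrow> (\<forall>v. Im (cinner v (T v)) = 0 \<and> 0 \<le> Re (cinner v (T v)))"

definition positive_bounded_op :: "('a::chilbert_space \<Rightarrow> 'a) \<Rightarrow> bool" where
  "positive_bounded_op T \<longleftrightarrow> bounded_clinear_op T \<and> op_nonneg T"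

definition adjoint_op :: "('a::chilbert_space \<Rightarrow> 'a) \<Rightarrow> 'a \<Rightarrow> 'a" where
  "adjoint_op T = (THE S. \<forall>u v. cinner (S u) v = cinner u (T v))"

text \<open>Countably additive in the weak operator topology, defined on the Borel
  subsets of (0,\<infinity>).\<close>
definition pos_op_measure :: "(real set \<Rightarrow> 'a::chilbert_space \<Rightarrow> 'a) \<Rightarrow> bool" where
  "pos_op_measure \<mu> \<longleftrightarrow>
     (\<forall>A. A \<in> sets borel \<and> A \<subseteq> {0<..} \<longrightarrow> positive_bounded_op (\<mu> A)) \<and>
     \<mu> {} = (\<lambda>v. 0) \<and>
     (\<forall>A::nat \<Rightarrow> real set. (\<forall>n. A n \<in> sets borel \<and> A n \<subseteq> {0<..}) \<longrightarrow> disjoint_family A \<longrightarrow>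
        (\<forall>u v. (\<lambda>n. cinner u (\<mu> (A n) v)) sums cinner u (\<mu> (\<Union>n. A n) v)))"

text \<open>Integrals against \<mu> of continuous integrands on (0,\<infinity>):
  Riemann--Stieltjes sums over uniform partitions of [a,b), then the improper
  limit a \<rightarrow> 0+, b \<rightarrow> \<infinity>.  The integrand F t B gives the contribution of a piece
  with tag t and operator mass B, e.g. F t B = k t * cinner u (B v) for
  \<integral> k d\<langle>u,\<mu> v\<rangle>, or F t B = cinner (f t) (B (g t)) for \<integral>\<langle>f, d\<mu> g\<rangle>.\<close>
definition rs_sum :: "(real set \<Rightarrow> 'a \<Rightarrow> 'a) \<Rightarrow> (real \<Rightarrow> ('a \<Rightarrow> 'a) \<Rightarrow> complex)
    \<Rightarrow> real \<Rightarrow> real \<Rightarrow> nat \<Rightarrow> complex" where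
  "rs_sum \<mu> F a b n =
     (\<Sum>j<n. F (a + real j * (b - a) / real n)
               (\<mu> {a + real j * (b - a) / real n ..< a + real (Suc j) * (b - a) / real n}))"

definition rs_on :: "(real set \<Rightarrow> 'a \<Rightarrow> 'a) \<Rightarrow> (real \<Rightarrow> ('a \<Rightarrow> 'a) \<Rightarrow> complex)
    \<Rightarrow> real \<Rightarrow> real \<Rightarrow> complex" where
  "rs_on \<mu> F a b = lim (rs_sum \<mu> F a b)"

definition has_mu_integral :: "(real set \<Rightarrow> 'a \<Rightarrow> 'a) \<Rightarrow> (real \<Rightarrow> ('a \<Rightarrow> 'a) \<Rightarrow> complex)
    \<Rightarrow> complex \<Rightarrow> bool" where
  "has_mu_integral \<mu> F c \<longleftrightarrow>
     (\<forall>a b. 0 < a \<longrightarrow> a < b \<longrightarrow> convergent (rs_sum \<mu> F a b)) \<and>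
     ((\<lambda>(a, b). rs_on \<mu> F a b) \<longlongrightarrow> c) (at_right 0 \<times>\<^sub>F at_top)"

definition H2 :: "(complex \<Rightarrow> 'a::chilbert_space) \<Rightarrow> bool" where
  "H2 f \<longleftrightarrow>
     (\<forall>z. 0 < Im z \<longrightarrow> (\<exists>d. (f has_derivative (\<lambda>h. scaleC h d)) (at z))) \<and>
     (\<exists>C<\<infinity>. \<forall>y>0. (\<integral>\<^sup>+x. ennreal ((norm (f (Complex x y)))\<^sup>2) \<partial>lborel) \<le> C)"

definition H2_norm :: "(complex \<Rightarrow> 'a::chilbert_space) \<Rightarrow> real" where
  "H2_norm f = sqrt (enn2real (SUP y\<in>{0<..}. \<integral>\<^sup>+x. ennreal ((norm (f (Complex x y)))\<^sup>2) \<partial>lborel))"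

definition carleson_measure :: "(real set \<Rightarrow> 'a::chilbert_space \<Rightarrow> 'a) \<Rightarrow> bool" where
  "carleson_measure \<mu> \<longleftrightarrow> pos_op_measure \<mu> \<and>
     (\<forall>f g. H2 f \<longrightarrow> H2 g \<longrightarrow>
        (\<exists>c. has_mu_integral \<mu> (\<lambda>t B. cinner (f (\<i> * complex_of_real t)) (B (g (\<i> * complex_of_real t)))) c)) \<and>
     (\<exists>C. \<forall>f g c. H2 f \<longrightarrow> H2 g \<longrightarrow>
        has_mu_integral \<mu> (\<lambda>t B. cinner (f (\<i> * complex_of_real t)) (B (g (\<i> * complex_of_real t)))) c \<longrightarrow>
        norm c \<le> C * H2_norm f * H2_norm g)"

definition N_kernel :: "complex \<Rightarrow> real \<Rightarrow> complex" where
  "N_kernel z t = 1 / (complex_of_real t - \<i> * z) - complex_of_real (t / (1 + t\<^sup>2))"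

definition N_mu :: "(real set \<Rightarrow> 'a::chilbert_space \<Rightarrow> 'a) \<Rightarrow> complex \<Rightarrow> 'a \<Rightarrow> 'a" where
  "N_mu \<mu> z = (THE T. bounded_clinear_op T \<and>
     (\<forall>u v. has_mu_integral \<mu> (\<lambda>t B. N_kernel z t / complex_of_real pi * cinner u (B v))
                (cinner u (T v))))"

definition R_mu :: "(real set \<Rightarrow> 'a::chilbert_space \<Rightarrow> 'a) \<Rightarrow> complex \<Rightarrow> 'a \<Rightarrow> 'a" where
  "R_mu \<mu> z = (\<lambda>v. scaleC (1/2) (N_mu \<mu> z v + adjoint_op (N_mu \<mu> z) v))"

definition I_mu :: "(real set \<Rightarrow> 'a::chilbert_space \<Rightarrow> 'a) \<Rightarrow> complex \<Rightarrow> 'a \<Rightarrow> 'a" where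
  "I_mu \<mu> z = (\<lambda>v. scaleC (1 / (2 * \<i>)) (N_mu \<mu> z v - adjoint_op (N_mu \<mu> z) v))"

end

theory Submission
  imports Defs
begin


lemma cinner_add_right: "cinner x (y + z) = cinner x y + cinner x (z::'a::chilbert_space)"
  by (metis cinner_commute cinner_add_left complex_cnj_add)

lemma cinner_zero_left[simp]: "cinner 0 (y::'a::chilbert_space) = 0"
  using cinner_add_left[of 0 0 y] by simp

lemma cinner_zero_right[simp]: "cinner (y::'a::chilbert_space) 0 = 0"
  using cinner_add_right[of y 0 0] by simp

lemma cinner_minus_left: "cinner (- x) (y::'a::chilbert_space) = - cinner x y"
  using cinner_add_left[of x "-x" y] by (simp add: eq_neg_iff_add_eq_0 add.commute)

lemma cinner_minus_right: "cinner y (- x::'a::chilbert_space) = - cinner y x"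
  using cinner_add_right[of y x "-x"] by (simp add: eq_neg_iff_add_eq_0 add.commute)

lemma cinner_diff_left: "cinner (x - z) (y::'a::chilbert_space) = cinner x y - cinner z y"
  using cinner_add_left[of x "-z" y] by (simp add: cinner_minus_left)

lemma cinner_diff_right: "cinner y (x - z::'a::chilbert_space) = cinner y x - cinner y z"
  using cinner_add_right[of y x "-z"] by (simp add: cinner_minus_right)

lemma cinner_scaleC_right: "cinner x (scaleC c y) = c * cinner x (y::'a::chilbert_space)"
  by (metis cinner_commute cinner_scaleC_left complex_cnj_cnj complex_cnj_mult)

lemma scaleC_zero_right[simp]: "scaleC c (0::'a::complex_vector) = 0"
  using scaleC_add_right[of c 0 0] by simp

lemma scaleC_zero_left[simp]: "scaleC 0 (x::'a::complex_vector) = 0"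
  using scaleR_scaleC[of 0 x] by simp

lemma scaleC_minus_right: "scaleC c (- x::'a::complex_vector) = - scaleC c x"
  using scaleC_add_right[of c x "-x"] by (simp add: eq_neg_iff_add_eq_0 add.commute)

lemma scaleC_diff_right: "scaleC c (x - y::'a::complex_vector) = scaleC c x - scaleC c y"
  using scaleC_add_right[of c x "-y"] by (simp add: scaleC_minus_right)

lemma scaleC_minus_left: "scaleC (- c) (x::'a::complex_vector) = - scaleC c x"
  using scaleC_add_left[of c "-c" x] by (simp add: eq_neg_iff_add_eq_0 add.commute)

lemma scaleC_diff_left: "scaleC (c - d) (x::'a::complex_vector) = scaleC c x - scaleC d x"
  using scaleC_add_left[of c "-d" x] by (simp add: scaleC_minus_left)

lemma scaleC_of_real: "scaleC (complex_of_real r) (x::'a::complex_vector) = scaleR r x"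
  by (simp add: scaleR_scaleC)

lemma scaleC_sum_right: "scaleC c (sum f S) = (\<Sum>j\<in>S. scaleC c (f j::'a::complex_vector))"
  by (induction S rule: infinite_finite_induct) (auto simp: scaleC_add_right)

lemma cinner_sum_right: "cinner x (sum f S) = (\<Sum>j\<in>S. cinner x (f j::'a::chilbert_space))"
  by (induction S rule: infinite_finite_induct) (auto simp: cinner_add_right)

lemma cinner_scaleR_left: "cinner (scaleR r x) (y::'a::chilbert_space) = of_real r * cinner x y"
  by (simp add: scaleR_scaleC cinner_scaleC_left)

lemma cinner_scaleR_right: "cinner x (scaleR r y) = of_real r * cinner x (y::'a::chilbert_space)"
  by (simp add: scaleR_scaleC cinner_scaleC_right)

lemma cinner_self_Im: "Im (cinner x (x::'a::chilbert_space)) = 0"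
proof -
  have "Im (cinner x x) = Im (cnj (cinner x x))" using cinner_commute[of x x] by metis
  hence "Im (cinner x x) = - Im (cinner x x)" by simp
  thus ?thesis by simp
qed

lemma cinner_self: "cinner x (x::'a::chilbert_space) = of_real ((norm x)\<^sup>2)"
  using cinner_self_Im[of x] cinner_ge_zero[of x] norm_eq_sqrt_cinner[of x]
  by (simp add: complex_eq_iff)

lemma norm_sq_Re: "(norm x)\<^sup>2 = Re (cinner x (x::'a::chilbert_space))"
  by (simp add: cinner_self)

lemma cinner_ext: "(\<And>u. cinner u x = cinner u y) \<Longrightarrow> x = (y::'a::chilbert_space)"
proof -
  assume h: "\<And>u. cinner u x = cinner u y"
  have "cinner (x - y) (x - y) = 0" unfolding cinner_diff_right h[of "x-y"] by (rule diff_self)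
  hence "x - y = 0" by (simp only: cinner_eq_zero_iff)
  thus ?thesis by (rule right_minus_eq[THEN iffD1])
qed

lemma cinner_ext_left: "(\<And>u. cinner x u = cinner y u) \<Longrightarrow> x = (y::'a::chilbert_space)"
  by (rule cinner_ext) (metis cinner_commute)

lemma norm_scaleC: "norm (scaleC c x) = cmod c * norm (x::'a::chilbert_space)"
proof -
  have "cinner (scaleC c x) (scaleC c x) = (cnj c * c) * cinner x x"
    by (simp add: cinner_scaleC_left cinner_scaleC_right)
  also have "cnj c * c = of_real ((cmod c)\<^sup>2)" using complex_norm_square[of c] by (simp add: mult.commute)
  finally have "(norm (scaleC c x))\<^sup>2 = (cmod c)\<^sup>2 * (norm x)\<^sup>2"
    unfolding norm_sq_Re by (simp add: cinner_self)
  hence "(norm (scaleC c x))\<^sup>2 = (cmod c * norm x)\<^sup>2" by (simp add: power_mult_distrib)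
  thus ?thesis by (simp add: power2_eq_iff_nonneg)
qed

lemma real_cs: "\<bar>Re (cinner x y)\<bar> \<le> norm x * norm (y::'a::chilbert_space)"
proof (cases "y = 0")
  case True thus ?thesis by simp
next
  case False
  hence ny: "norm y > 0" by simp
  define r where "r = Re (cinner x y)"
  define t where "t = r / (norm y)\<^sup>2"
  have ryx: "Re (cinner y x) = r" unfolding r_def by (subst cinner_commute) simp
  have "0 \<le> Re (cinner (x - t *\<^sub>R y) (x - t *\<^sub>R y))" by (rule cinner_ge_zero)
  also have "Re (cinner (x - t *\<^sub>R y) (x - t *\<^sub>R y)) = (norm x)\<^sup>2 - t * r - t * r + t * t * (norm y)\<^sup>2"
    unfolding cinner_diff_left cinner_diff_right cinner_scaleR_left cinner_scaleR_right norm_sq_Re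
    using ryx r_def by (simp add: algebra_simps)
  also have "\<dots> = (norm x)\<^sup>2 - r\<^sup>2 / (norm y)\<^sup>2"
    using ny by (simp add: t_def field_simps power2_eq_square)
  finally have "r\<^sup>2 \<le> (norm x)\<^sup>2 * (norm y)\<^sup>2" using ny by (simp add: field_simps)
  hence "r\<^sup>2 \<le> (norm x * norm y)\<^sup>2" by (simp add: power_mult_distrib)
  thus ?thesis unfolding r_def by (simp add: power2_le_iff_abs_le)
qed

lemma cauchy_schwarz: "cmod (cinner x y) \<le> norm x * norm (y::'a::chilbert_space)"
proof (cases "cinner x y = 0")
  case True thus ?thesis by simp
next
  case False
  define \<theta> where "\<theta> = cnj (cinner x y) / cmod (cinner x y)"
  have "cinner x (scaleC \<theta> y) = cnj (cinner x y) * cinner x y / cmod (cinner x y)"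
    unfolding cinner_scaleC_right \<theta>_def by simp
  also have "cnj (cinner x y) * cinner x y = of_real ((cmod (cinner x y))\<^sup>2)"
    using complex_norm_square[of "cinner x y"] by (simp add: mult.commute)
  finally have "cinner x (scaleC \<theta> y) = of_real (cmod (cinner x y))"
    using False by (simp add: power2_eq_square)
  hence "cmod (cinner x y) = Re (cinner x (scaleC \<theta> y))" by simp
  also have "\<dots> \<le> norm x * norm (scaleC \<theta> y)" using real_cs[of x "scaleC \<theta> y"] by linarith
  also have "norm (scaleC \<theta> y) = norm y" using False
    by (simp add: norm_scaleC \<theta>_def norm_divide)
  finally show ?thesis .
qed


lemma sigma_borel: "sigma_algebra UNIV (sets (borel::real measure))"
  by (metis space_borel sets.sigma_algebra_axioms)

definition Mw :: "(real set \<Rightarrow> 'a::chilbert_space \<Rightarrow> 'a) \<Rightarrow> 'a \<Rightarrow> real measure" where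
  "Mw \<mu> w = measure_of UNIV (sets borel) (\<lambda>A. ennreal (Re (cinner w (\<mu> (A \<inter> {0<..}) w))))"

lemma sets_Mw[measurable_cong, simp]: "sets (Mw \<mu> w) = sets borel"
  unfolding Mw_def by (simp add: sigma_algebra.sets_measure_of_eq[OF sigma_borel])

lemma space_Mw[simp]: "space (Mw \<mu> w) = UNIV"
  unfolding Mw_def by (simp add: sigma_algebra.space_measure_of_eq[OF sigma_borel])

lemma pos_op_borel:
  assumes "pos_op_measure \<mu>" "A \<in> sets borel"
  shows "positive_bounded_op (\<mu> (A \<inter> {0<..}))"
  using assms unfolding pos_op_measure_def by auto

lemma pos_op_clinear:
  assumes "pos_op_measure \<mu>" "A \<in> sets borel"
  shows "bounded_linear (\<mu> (A \<inter> {0<..}))" "\<And>c x. \<mu> (A \<inter> {0<..}) (scaleC c x) = scaleC c (\<mu> (A \<inter> {0<..}) x)"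
  using pos_op_borel[OF assms] unfolding positive_bounded_op_def bounded_clinear_op_def by auto

lemma pos_op_nonneg:
  assumes "pos_op_measure \<mu>" "A \<in> sets borel"
  shows "Im (cinner v (\<mu> (A \<inter> {0<..}) v)) = 0" "0 \<le> Re (cinner v (\<mu> (A \<inter> {0<..}) v))"
  using pos_op_borel[OF assms] unfolding positive_bounded_op_def op_nonneg_def by auto

lemma emeasure_Mw:
  assumes "pos_op_measure \<mu>" "A \<in> sets borel"
  shows "emeasure (Mw \<mu> w) A = ennreal (Re (cinner w (\<mu> (A \<inter> {0<..}) w)))"
  unfolding Mw_def
proof (rule emeasure_measure_of_sigma[OF sigma_borel _ _ assms(2)])
  show "positive (sets borel) (\<lambda>A. ennreal (Re (cinner w (\<mu> (A \<inter> {0<..}) w))))"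
    using assms(1) unfolding positive_def pos_op_measure_def by simp
  show "countably_additive (sets borel) (\<lambda>A. ennreal (Re (cinner w (\<mu> (A \<inter> {0<..}) w))))"
    unfolding countably_additive_def
  proof (intro allI impI)
    fix F :: "nat \<Rightarrow> real set"
    assume F: "range F \<subseteq> sets borel" "disjoint_family F" "\<Union> (range F) \<in> sets borel"
    define G where "G n = F n \<inter> {0<..}" for n
    have G: "\<forall>n. G n \<in> sets borel \<and> G n \<subseteq> {0<..}" using F(1) unfolding G_def by auto
    have dG: "disjoint_family G" using F(2) unfolding G_def disjoint_family_on_def by auto
    have UG: "(\<Union>n. G n) = \<Union> (range F) \<inter> {0<..}" unfolding G_def by auto
    have "(\<lambda>n. cinner w (\<mu> (G n) w)) sums cinner w (\<mu> (\<Union>n. G n) w)"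
      using assms(1) G dG unfolding pos_op_measure_def by blast
    hence s: "(\<lambda>n. Re (cinner w (\<mu> (G n) w))) sums Re (cinner w (\<mu> (\<Union> (range F) \<inter> {0<..}) w))"
      unfolding UG by (rule sums_Re)
    have nn: "\<And>n. 0 \<le> Re (cinner w (\<mu> (G n) w))"
      using pos_op_nonneg(2)[OF assms(1)] F(1) unfolding G_def by auto
    have "(\<Sum>n. ennreal (Re (cinner w (\<mu> (G n) w)))) = ennreal (\<Sum>n. Re (cinner w (\<mu> (G n) w)))"
      using nn s by (intro suminf_ennreal2) (auto simp: sums_iff)
    also have "\<dots> = ennreal (Re (cinner w (\<mu> (\<Union> (range F) \<inter> {0<..}) w)))"
      using s by (simp add: sums_iff)
    finally show "(\<Sum>n. ennreal (Re (cinner w (\<mu> (F n \<inter> {0<..}) w)))) =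
        ennreal (Re (cinner w (\<mu> (\<Union> (range F) \<inter> {0<..}) w)))" unfolding G_def .
  qed
qed

lemma measure_Mw:
  assumes "pos_op_measure \<mu>" "A \<in> sets borel"
  shows "measure (Mw \<mu> w) A = Re (cinner w (\<mu> (A \<inter> {0<..}) w))"
  using emeasure_Mw[OF assms] pos_op_nonneg(2)[OF assms] by (simp add: measure_def)

lemma finite_Mw:
  assumes "pos_op_measure \<mu>"
  shows "finite_measure (Mw \<mu> w)"
  by (rule finite_measureI) (simp add: emeasure_Mw[OF assms])

lemma cinner_mu_self:
  assumes "pos_op_measure \<mu>" "A \<in> sets borel"
  shows "cinner w (\<mu> (A \<inter> {0<..}) w) = of_real (measure (Mw \<mu> w) A)"
  using measure_Mw[OF assms] pos_op_nonneg(1)[OF assms] by (simp add: complex_eq_iff)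

definition pol :: "'a::chilbert_space \<Rightarrow> 'a \<Rightarrow> ('a \<Rightarrow> complex) \<Rightarrow> complex" where
  "pol u v \<phi> = (\<phi> (u + v) - \<phi> (u - v) - \<i> * \<phi> (u + scaleC \<i> v) + \<i> * \<phi> (u - scaleC \<i> v)) / 4"

lemma polarization:
  fixes B :: "'a::chilbert_space \<Rightarrow> 'a"
  assumes add: "\<And>x y. B (x + y) = B x + B y" and sc: "\<And>c x. B (scaleC c x) = scaleC c (B x)"
  shows "cinner u (B v) = pol u v (\<lambda>w. cinner w (B w))"
proof -
  have diff: "B (x - y) = B x - B y" for x y using add[of "x - y" y] by (simp add: algebra_simps)
  show ?thesis unfolding pol_def add diff sc
    by (simp add: cinner_add_left cinner_add_right cinner_diff_left cinner_diff_right
        cinner_scaleC_left cinner_scaleC_right algebra_simps)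
qed

lemma pol_sum: "pol u v (\<lambda>w. \<Sum>j\<in>S. f j w) = (\<Sum>j\<in>S. pol u v (f j))"
  unfolding pol_def by (simp add: sum_divide_distrib[symmetric] sum_subtractf sum.distrib sum_distrib_left)

lemma pol_cmult: "pol u v (\<lambda>w. c * f w) = c * pol u v f"
  unfolding pol_def by (simp add: algebra_simps)

lemma cinner_mu_pol:
  assumes "pos_op_measure \<mu>" "A \<in> sets borel"
  shows "cinner u (\<mu> (A \<inter> {0<..}) v) = pol u v (\<lambda>w. of_real (measure (Mw \<mu> w) A))"
proof -
  have "cinner u (\<mu> (A \<inter> {0<..}) v) = pol u v (\<lambda>w. cinner w (\<mu> (A \<inter> {0<..}) w))"
    using pos_op_clinear[OF assms] by (intro polarization) (auto simp: linear_add bounded_linear.linear)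
  thus ?thesis by (simp add: cinner_mu_self[OF assms])
qed


definition Iv :: "real \<Rightarrow> real \<Rightarrow> nat \<Rightarrow> real set" where
  "Iv a h j = {a + real j * h ..< a + real (Suc j) * h}"

definition stp :: "(real \<Rightarrow> complex) \<Rightarrow> real \<Rightarrow> real \<Rightarrow> nat \<Rightarrow> real \<Rightarrow> complex" where
  "stp c a h N t = (\<Sum>j<N. c (a + real j * h) * of_real (indicator (Iv a h j) t))"

definition Sop :: "(real set \<Rightarrow> 'a::chilbert_space \<Rightarrow> 'a) \<Rightarrow> (real \<Rightarrow> complex) \<Rightarrow> real \<Rightarrow> real \<Rightarrow> nat \<Rightarrow> 'a \<Rightarrow> 'a" where
  "Sop \<mu> c a h N v = (\<Sum>j<N. scaleC (c (a + real j * h)) (\<mu> (Iv a h j \<inter> {0<..}) v))"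

lemma Iv_borel[measurable]: "Iv a h j \<in> sets borel"
  unfolding Iv_def by simp

lemma Iv_unique:
  assumes "h > 0" "t \<in> Iv a h j"
  shows "j = nat \<lfloor>(t - a) / h\<rfloor>"
proof -
  have "real j * h \<le> t - a" "t - a < real (Suc j) * h" using assms unfolding Iv_def by auto
  hence "real j \<le> (t - a) / h" "(t - a) / h < real j + 1" using assms(1)
    by (auto simp: field_simps)
  hence "\<lfloor>(t - a) / h\<rfloor> = int j" by (intro floor_unique) auto
  thus ?thesis by simp
qed

lemma Iv_mem:
  assumes "h > 0" "a \<le> t" "t < a + real N * h"
  shows "nat \<lfloor>(t - a) / h\<rfloor> < N \<and> t \<in> Iv a h (nat \<lfloor>(t - a) / h\<rfloor>)"
proof -
  define j where "j = nat \<lfloor>(t - a) / h\<rfloor>"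
  have q0: "0 \<le> (t - a) / h" using assms by simp
  have "real j = of_int \<lfloor>(t - a) / h\<rfloor>" unfolding j_def using q0 by simp
  hence j1: "real j \<le> (t - a) / h" "(t - a) / h < real j + 1" by linarith+
  have "(t - a) / h < real N" using assms by (simp add: field_simps)
  hence "j < N" using j1 by linarith
  moreover have "a + real j * h \<le> t" "t < a + real (Suc j) * h" using j1 assms(1)
    by (auto simp: field_simps)
  ultimately show ?thesis unfolding j_def[symmetric] Iv_def by auto
qed

lemma Iv_subset: "j < N \<Longrightarrow> h > 0 \<Longrightarrow> Iv a h j \<subseteq> {a..<a + real N * h}"
proof -
  assume "j < N" "h > 0"
  hence "real (Suc j) * h \<le> real N * h" by (intro mult_right_mono) auto
  moreover have "0 \<le> real j * h" using \<open>h > 0\<close> by simp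
  ultimately show ?thesis unfolding Iv_def by auto
qed

locale kern =
  fixes \<mu> :: "real set \<Rightarrow> 'a::chilbert_space \<Rightarrow> 'a" and c :: "real \<Rightarrow> complex" and L K K2 :: real
  assumes pos: "pos_op_measure \<mu>"
    and c_meas[measurable]: "c \<in> borel_measurable borel"
    and lip: "\<And>s t. cmod (c s - c t) \<le> L * \<bar>s - t\<bar>"
    and bnd: "\<And>t. cmod (c t) \<le> K"
    and tail: "\<And>t. t > 0 \<Longrightarrow> cmod (c t) \<le> K2 / t"
begin

lemma L_nonneg: "0 \<le> L"
proof -
  have "cmod (c 1 - c 0) \<le> L" using lip[of 1 0] by simp
  moreover have "0 \<le> cmod (c 1 - c 0)" by simp
  ultimately show ?thesis by linarith
qed

lemma K_nonneg: "0 \<le> K"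
  using bnd[of 0] norm_ge_zero[of "c 0"] by linarith

lemma K2_nonneg: "0 \<le> K2"
proof -
  have "cmod (c 1) \<le> K2" using tail[of 1] by simp
  moreover have "0 \<le> cmod (c 1)" by simp
  ultimately show ?thesis by linarith
qed

lemma stp_eq:
  assumes "h > 0" "a \<le> t" "t < a + real N * h"
  shows "stp c a h N t = c (a + real (nat \<lfloor>(t - a) / h\<rfloor>) * h)"
proof -
  define j0 where "j0 = nat \<lfloor>(t - a) / h\<rfloor>"
  have j0: "j0 < N" "t \<in> Iv a h j0" using Iv_mem[OF assms] unfolding j0_def by auto
  have "stp c a h N t = (\<Sum>j\<in>{j0}. c (a + real j * h) * of_real (indicator (Iv a h j) t))"
    unfolding stp_def
  proof (rule sum.mono_neutral_right)
    show "\<forall>i\<in>{..<N} - {j0}. c (a + real i * h) * complex_of_real (indicator (Iv a h i) t) = 0"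
    proof
      fix i assume i: "i \<in> {..<N} - {j0}"
      have "t \<notin> Iv a h i"
      proof
        assume "t \<in> Iv a h i"
        hence "i = j0" unfolding j0_def by (rule Iv_unique[OF assms(1)])
        thus False using i by simp
      qed
      thus "c (a + real i * h) * complex_of_real (indicator (Iv a h i) t) = 0" by simp
    qed
  qed (use j0 in auto)
  thus ?thesis using j0 unfolding j0_def by simp
qed

lemma stp_zero:
  assumes "h > 0" "t \<notin> {a..<a + real N * h}"
  shows "stp c a h N t = 0"
  unfolding stp_def
proof (intro sum.neutral ballI)
  fix j assume "j \<in> {..<N}"
  hence "t \<notin> Iv a h j" using Iv_subset[of j N h a] assms by auto
  thus "c (a + real j * h) * complex_of_real (indicator (Iv a h j) t) = 0" by simp
qed

lemma stp_bound:
  assumes "h > 0"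
  shows "cmod (stp c a h N t - c t * of_real (indicator {a..<a + real N * h} t)) \<le> L * h"
proof (cases "t \<in> {a..<a + real N * h}")
  case True
  define j0 where "j0 = nat \<lfloor>(t - a) / h\<rfloor>"
  have j0: "t \<in> Iv a h j0" using Iv_mem[OF assms] True unfolding j0_def by auto
  have "cmod (stp c a h N t - c t * of_real (indicator {a..<a + real N * h} t))
       = cmod (c (a + real j0 * h) - c t)"
    using True stp_eq[OF assms] unfolding j0_def by simp
  also have "\<dots> \<le> L * \<bar>a + real j0 * h - t\<bar>" by (rule lip)
  also have "\<dots> \<le> L * h"
  proof (intro mult_left_mono L_nonneg)
    show "\<bar>a + real j0 * h - t\<bar> \<le> h" using j0 unfolding Iv_def by (auto simp: algebra_simps)
  qed
  finally show ?thesis .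
next
  case False
  thus ?thesis using stp_zero[OF assms False] L_nonneg assms by simp
qed

lemma stp_meas[measurable]: "stp c a h N \<in> borel_measurable borel"
  unfolding stp_def by measurable

lemma AE_pos: "AE t in Mw \<mu> w. t > 0"
proof (rule AE_I[of _ _ "{..0}"])
  show "emeasure (Mw \<mu> w) {..0} = 0"
  proof -
    have e: "{..0::real} \<inter> {0<..} = {}" by auto
    show ?thesis using emeasure_Mw[OF pos, of "{..0}"] pos unfolding pos_op_measure_def e by simp
  qed
qed auto

lemma Mw_finite: "finite_measure (Mw \<mu> w)"
  by (rule finite_Mw[OF pos])

lemma int_bound:
  assumes g[measurable]: "g \<in> borel_measurable borel"
    and b: "\<And>t. t > 0 \<Longrightarrow> cmod (g t) \<le> B"
  shows "cmod (integral\<^sup>L (Mw \<mu> w) g) \<le> B * measure (Mw \<mu> w) UNIV"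
proof -
  interpret finite_measure "Mw \<mu> w" by (rule Mw_finite)
  have ae: "AE t in Mw \<mu> w. cmod (g t) \<le> B" using AE_pos by eventually_elim (rule b)
  have int: "integrable (Mw \<mu> w) g"
    by (rule integrable_const_bound[OF ae]) simp
  have "cmod (integral\<^sup>L (Mw \<mu> w) g) \<le> (\<integral>t. cmod (g t) \<partial>Mw \<mu> w)" by (rule integral_norm_bound)
  also have "\<dots> \<le> (\<integral>t. B \<partial>Mw \<mu> w)"
    using int ae by (intro integral_mono_AE) auto
  also have "\<dots> = B * measure (Mw \<mu> w) UNIV" by simp
  finally show ?thesis .
qed

lemma integrable_bounded:
  assumes g[measurable]: "g \<in> borel_measurable borel"
    and b: "\<And>t. t > 0 \<Longrightarrow> cmod (g t) \<le> B"
  shows "integrable (Mw \<mu> w) (g :: real \<Rightarrow> complex)"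
proof -
  interpret finite_measure "Mw \<mu> w" by (rule Mw_finite)
  have ae: "AE t in Mw \<mu> w. cmod (g t) \<le> B" using AE_pos by eventually_elim (rule b)
  show ?thesis by (rule integrable_const_bound[OF ae]) simp
qed

lemma int_stp: "integral\<^sup>L (Mw \<mu> w) (stp c a h N) =
    (\<Sum>j<N. c (a + real j * h) * of_real (measure (Mw \<mu> w) (Iv a h j)))"
proof -
  interpret finite_measure "Mw \<mu> w" by (rule Mw_finite)
  have "integral\<^sup>L (Mw \<mu> w) (stp c a h N) =
      (\<Sum>j<N. integral\<^sup>L (Mw \<mu> w) (\<lambda>t. c (a + real j * h) * of_real (indicator (Iv a h j) t)))"
    unfolding stp_def
    by (rule Bochner_Integration.integral_sum) (auto intro!: integrable_mult_right simp: emeasure_Mw[OF pos])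
  also have "\<dots> = (\<Sum>j<N. c (a + real j * h) * of_real (measure (Mw \<mu> w) (Iv a h j)))"
    by simp
  finally show ?thesis .
qed

lemma cinner_Sop: "cinner u (Sop \<mu> c a h N v) = pol u v (\<lambda>w. integral\<^sup>L (Mw \<mu> w) (stp c a h N))"
proof -
  have m: "measure (Mw \<mu> w) (Iv a h j) = measure (Mw \<mu> w) (Iv a h j \<inter> {0<..})" for w j
    using measure_Mw[OF pos, of "Iv a h j"] measure_Mw[OF pos, of "Iv a h j \<inter> {0<..}"]
    by (simp add: Int_assoc)
  have "cinner u (Sop \<mu> c a h N v) = (\<Sum>j<N. c (a + real j * h) * cinner u (\<mu> (Iv a h j \<inter> {0<..}) v))"
    unfolding Sop_def by (simp add: cinner_sum_right cinner_scaleC_right)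
  also have "\<dots> = (\<Sum>j<N. c (a + real j * h) * pol u v (\<lambda>w. of_real (measure (Mw \<mu> w) (Iv a h j))))"
    using cinner_mu_pol[OF pos, of "Iv a h j \<inter> {0<..}" for j] m by simp
  also have "\<dots> = pol u v (\<lambda>w. integral\<^sup>L (Mw \<mu> w) (stp c a h N))"
    unfolding int_stp pol_sum pol_cmult ..
  finally show ?thesis .
qed

end


context kern begin

definition cI :: "real \<Rightarrow> real \<Rightarrow> real \<Rightarrow> complex" where
  "cI a b t = c t * of_real (indicator {a..<b} t)"

lemma cI_meas[measurable]: "cI a b \<in> borel_measurable borel"
  unfolding cI_def by measurable

lemma integrable_c: "integrable (Mw \<mu> w) c"
  by (rule integrable_bounded[OF c_meas bnd])

lemma integrable_cI: "integrable (Mw \<mu> w) (cI a b)"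
  by (rule integrable_bounded[where B = K]) (auto simp: cI_def indicator_def bnd K_nonneg)

lemma integrable_stp:
  assumes "h > 0" shows "integrable (Mw \<mu> w) (stp c a h N)"
proof (rule integrable_bounded[where B = "L * h + K"])
  fix t :: real
  have "cmod (stp c a h N t) \<le> cmod (stp c a h N t - c t * of_real (indicator {a..<a + real N * h} t))
      + cmod (c t * of_real (indicator {a..<a + real N * h} t))"
    using norm_triangle_ineq[of "stp c a h N t - c t * of_real (indicator {a..<a + real N * h} t)"
        "c t * of_real (indicator {a..<a + real N * h} t)"] by simp
  also have "\<dots> \<le> L * h + K"
    using stp_bound[OF assms, of a N t] bnd[of t] by (intro add_mono) (auto simp: indicator_def K_nonneg)
  finally show "cmod (stp c a h N t) \<le> L * h + K" .
qed simp

lemma Mw_UNIV_bound: "\<exists>C>0. \<forall>w. measure (Mw \<mu> w) UNIV \<le> C * (norm w)\<^sup>2"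
proof -
  obtain KU where KU: "KU > 0" "\<And>x. norm (\<mu> (UNIV \<inter> {0<..}) x) \<le> norm x * KU"
    using bounded_linear.pos_bounded[OF pos_op_clinear(1)[OF pos, of UNIV]] by auto
  have "measure (Mw \<mu> w) UNIV \<le> KU * (norm w)\<^sup>2" for w
  proof -
    have "measure (Mw \<mu> w) UNIV = Re (cinner w (\<mu> (UNIV \<inter> {0<..}) w))"
      by (rule measure_Mw[OF pos]) simp
    also have "\<dots> \<le> cmod (cinner w (\<mu> (UNIV \<inter> {0<..}) w))" by (rule complex_Re_le_cmod)
    also have "\<dots> \<le> norm w * norm (\<mu> (UNIV \<inter> {0<..}) w)" by (rule cauchy_schwarz)
    also have "\<dots> \<le> norm w * (norm w * KU)" by (intro mult_left_mono KU) simp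
    finally show ?thesis by (simp add: power2_eq_square mult_ac)
  qed
  thus ?thesis using KU by blast
qed

lemma stp_conv:
  assumes "a < b"
  shows "(\<lambda>n. integral\<^sup>L (Mw \<mu> w) (stp c a ((b - a) / real n) n)) \<longlonglongrightarrow> integral\<^sup>L (Mw \<mu> w) (cI a b)"
proof -
  define M where "M = measure (Mw \<mu> w) UNIV"
  have M0: "0 \<le> M" unfolding M_def by simp
  have ev: "eventually (\<lambda>n. cmod (integral\<^sup>L (Mw \<mu> w) (stp c a ((b - a) / real n) n) - integral\<^sup>L (Mw \<mu> w) (cI a b))
          \<le> L * (b - a) * M / real n) sequentially"
    using eventually_ge_at_top[of 1]
  proof eventually_elim
    case (elim n)
    define h where "h = (b - a) / real n"
    have h0: "h > 0" using assms elim unfolding h_def by simp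
    have ab: "a + real n * h = b" using elim unfolding h_def by simp
    have "integral\<^sup>L (Mw \<mu> w) (stp c a h n) - integral\<^sup>L (Mw \<mu> w) (cI a b) =
        integral\<^sup>L (Mw \<mu> w) (\<lambda>t. stp c a h n t - cI a b t)"
      using integrable_stp[OF h0] integrable_cI by simp
    also have "cmod \<dots> \<le> L * h * M" unfolding M_def
      using stp_bound[OF h0, of a n] unfolding ab cI_def by (intro int_bound) auto
    finally show ?case unfolding h_def by (simp add: field_simps)
  qed
  have "(\<lambda>n. L * (b - a) * M / real n) \<longlonglongrightarrow> 0"
    by (intro tendsto_divide_0[OF tendsto_const] filterlim_at_top_imp_at_infinity
        filterlim_real_sequentially)
  hence "(\<lambda>n. integral\<^sup>L (Mw \<mu> w) (stp c a ((b - a) / real n) n) - integral\<^sup>L (Mw \<mu> w) (cI a b)) \<longlonglongrightarrow> 0"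
    by (rule Lim_null_comparison[OF ev])
  thus ?thesis by (simp add: LIM_zero_iff)
qed

lemma rs_eq:
  assumes "0 < a" "a < b"
  shows "rs_sum \<mu> (\<lambda>t B. c t * cinner u (B v)) a b n = cinner u (Sop \<mu> c a ((b - a) / real n) n v)"
proof -
  have "Iv a ((b - a) / real n) j \<inter> {0<..} =
      {a + real j * (b - a) / real n ..< a + real (Suc j) * (b - a) / real n}" for j
  proof -
    have q: "0 \<le> real j * (b - a) / real n" using assms by simp
    have "{a + real j * (b - a) / real n ..< a + real (Suc j) * (b - a) / real n} \<subseteq> {0<..}"
    proof
      fix x assume "x \<in> {a + real j * (b - a) / real n ..< a + real (Suc j) * (b - a) / real n}"
      hence "a + real j * (b - a) / real n \<le> x" by simp
      hence "0 < x" using q assms(1) by linarith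
      thus "x \<in> {0<..}" by simp
    qed
    thus ?thesis unfolding Iv_def times_divide_eq_right by (rule Int_absorb2)
  qed
  thus ?thesis unfolding rs_sum_def Sop_def
    by (simp add: cinner_sum_right cinner_scaleC_right)
qed

definition Jab :: "real \<Rightarrow> real \<Rightarrow> 'a \<Rightarrow> 'a \<Rightarrow> complex" where
  "Jab a b u v = pol u v (\<lambda>w. integral\<^sup>L (Mw \<mu> w) (cI a b))"

definition Jinf :: "'a \<Rightarrow> 'a \<Rightarrow> complex" where
  "Jinf u v = pol u v (\<lambda>w. integral\<^sup>L (Mw \<mu> w) c)"

lemma rs_conv:
  assumes "0 < a" "a < b"
  shows "rs_sum \<mu> (\<lambda>t B. c t * cinner u (B v)) a b \<longlonglongrightarrow> Jab a b u v"
  unfolding rs_eq[OF assms] cinner_Sop Jab_def pol_def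
  by (intro tendsto_intros stp_conv assms) simp

end


context kern begin

lemma tail_bound:
  assumes "0 < a" "a < b"
  shows "cmod (integral\<^sup>L (Mw \<mu> w) c - integral\<^sup>L (Mw \<mu> w) (cI a b))
    \<le> K * measure (Mw \<mu> w) {0<..<a} + K2 / b * measure (Mw \<mu> w) UNIV"
proof -
  interpret finite_measure "Mw \<mu> w" by (rule Mw_finite)
  define g where "g t = K * indicator {0<..<a} t + K2 / b" for t
  have g_meas[measurable]: "g \<in> borel_measurable borel" unfolding g_def by measurable
  have gint: "integrable (Mw \<mu> w) g"
  proof (rule integrable_const_bound[where B = "K + K2 / b"])
    show "AE x in Mw \<mu> w. norm (g x) \<le> K + K2 / b"
      using K_nonneg K2_nonneg assms by (auto simp: g_def indicator_def)
  qed simp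
  have pw: "cmod (c t - cI a b t) \<le> g t" if t: "t > 0" for t
  proof (cases "t < a")
    case True
    hence "cmod (c t - cI a b t) = cmod (c t)" by (simp add: cI_def)
    also have "\<dots> \<le> K" by (rule bnd)
    also have "\<dots> \<le> g t" using True t K2_nonneg assms by (simp add: g_def)
    finally show ?thesis .
  next
    case False
    show ?thesis
    proof (cases "t < b")
      case True
      hence "cmod (c t - cI a b t) = 0" using False by (simp add: cI_def)
      also have "\<dots> \<le> g t" using K_nonneg K2_nonneg assms by (simp add: g_def)
      finally show ?thesis .
    next
      case tb: False
      hence "cmod (c t - cI a b t) = cmod (c t)" by (simp add: cI_def)
      also have "\<dots> \<le> K2 / t" using t by (rule tail)
      also have "\<dots> \<le> K2 / b" using tb assms K2_nonneg by (intro divide_left_mono) auto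
      also have "\<dots> \<le> g t" using K_nonneg by (simp add: g_def)
      finally show ?thesis .
    qed
  qed
  have "integral\<^sup>L (Mw \<mu> w) c - integral\<^sup>L (Mw \<mu> w) (cI a b) = integral\<^sup>L (Mw \<mu> w) (\<lambda>t. c t - cI a b t)"
    using integrable_c integrable_cI by simp
  also have "cmod \<dots> \<le> (\<integral>t. cmod (c t - cI a b t) \<partial>Mw \<mu> w)" by (rule integral_norm_bound)
  also have "\<dots> \<le> integral\<^sup>L (Mw \<mu> w) g"
  proof (rule integral_mono_AE)
    show "integrable (Mw \<mu> w) (\<lambda>t. cmod (c t - cI a b t))"
      using integrable_c integrable_cI by auto
    show "AE t in Mw \<mu> w. cmod (c t - cI a b t) \<le> g t" using AE_pos by eventually_elim (rule pw)
  qed (rule gint)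
  also have "integral\<^sup>L (Mw \<mu> w) g = K * measure (Mw \<mu> w) {0<..<a} + K2 / b * measure (Mw \<mu> w) UNIV"
  proof -
    have i1: "integrable (Mw \<mu> w) (\<lambda>t. K * indicator {0<..<a} t)"
      by (rule integrable_const_bound[where B = K]) (auto simp: indicator_def K_nonneg)
    show ?thesis unfolding g_def by (subst Bochner_Integration.integral_add[OF i1]) auto
  qed
  finally show ?thesis .
qed

lemma small0:
  assumes "0 < e"
  shows "\<exists>a0>0. measure (Mw \<mu> w) {0<..<a0} < e"
proof -
  interpret finite_measure "Mw \<mu> w" by (rule Mw_finite)
  define A where "A i = {0<..<1 / real (Suc i)}" for i
  have fr: "1 / real (Suc n) \<le> 1 / real (Suc m)" if "m \<le> n" for m n
    using that by (intro divide_left_mono) auto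
  have dec: "decseq A"
  proof (rule antimonoI)
    fix m n :: nat assume "m \<le> n"
    thus "A n \<le> A m" using fr[of m n] unfolding A_def by auto
  qed
  have I: "(\<Inter>i. A i) = {}"
  proof (rule equals0I)
    fix x assume "x \<in> (\<Inter>i. A i)"
    hence x: "\<And>i. 0 < x \<and> x < 1 / real (Suc i)" unfolding A_def by auto
    then obtain n where "inverse (real (Suc n)) < x" using reals_Archimedean by blast
    thus False using x[of n] by (simp add: field_simps)
  qed
  have "(\<lambda>i. measure (Mw \<mu> w) (A i)) \<longlonglongrightarrow> measure (Mw \<mu> w) (\<Inter>i. A i)"
    by (rule Lim_measure_decseq[OF _ dec]) (auto simp: A_def)
  hence "(\<lambda>i. measure (Mw \<mu> w) (A i)) \<longlonglongrightarrow> 0" unfolding I by simp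
  hence "eventually (\<lambda>i. measure (Mw \<mu> w) (A i) < e) sequentially"
    using assms by (rule order_tendstoD(2))
  then obtain i where "measure (Mw \<mu> w) (A i) < e" by (auto simp: eventually_sequentially)
  thus ?thesis unfolding A_def by (intro exI[of _ "1 / real (Suc i)"]) auto
qed

lemma w_lim: "((\<lambda>p. integral\<^sup>L (Mw \<mu> w) (cI (fst p) (snd p))) \<longlongrightarrow> integral\<^sup>L (Mw \<mu> w) c)
    (at_right 0 \<times>\<^sub>F at_top)"
proof (rule tendstoI)
  fix e :: real assume e: "0 < e"
  interpret finite_measure "Mw \<mu> w" by (rule Mw_finite)
  define M where "M = measure (Mw \<mu> w) UNIV"
  have M0: "0 \<le> M" unfolding M_def by simp
  obtain a0 where a0: "a0 > 0" "measure (Mw \<mu> w) {0<..<a0} < e / (2 * (K + 1))"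
    using small0[of "e / (2 * (K + 1))"] e K_nonneg by auto
  define b0 where "b0 = max a0 (2 * K2 * M / e) + 1"
  show "eventually (\<lambda>p. dist (integral\<^sup>L (Mw \<mu> w) (cI (fst p) (snd p))) (integral\<^sup>L (Mw \<mu> w) c) < e)
      (at_right 0 \<times>\<^sub>F at_top)"
    unfolding eventually_prod_filter
  proof (intro exI conjI allI impI)
    show "eventually (\<lambda>a. a \<in> {0<..<a0}) (at_right 0)" by (rule eventually_at_right_real[OF a0(1)])
    show "eventually (\<lambda>b. b0 < b) at_top" by simp
    fix a b assume a: "a \<in> {0<..<a0}" and b: "b0 < b"
    have ab: "0 < a" "a < b" using a b unfolding b0_def by auto
    have bpos: "b > 0" using ab by simp
    have "dist (integral\<^sup>L (Mw \<mu> w) (cI a b)) (integral\<^sup>L (Mw \<mu> w) c)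
        = cmod (integral\<^sup>L (Mw \<mu> w) c - integral\<^sup>L (Mw \<mu> w) (cI a b))"
      by (simp add: dist_norm norm_minus_commute)
    also have "\<dots> \<le> K * measure (Mw \<mu> w) {0<..<a} + K2 / b * M"
      unfolding M_def by (rule tail_bound[OF ab])
    also have "K * measure (Mw \<mu> w) {0<..<a} \<le> K * measure (Mw \<mu> w) {0<..<a0}"
      using a K_nonneg by (intro mult_left_mono finite_measure_mono) auto
    also have "\<dots> \<le> (K + 1) * measure (Mw \<mu> w) {0<..<a0}" by (simp add: algebra_simps)
    also have "\<dots> < e / 2"
    proof -
      have "(K + 1) * measure (Mw \<mu> w) {0<..<a0} < (K + 1) * (e / (2 * (K + 1)))"
        using a0(2) K_nonneg by (intro mult_strict_left_mono) auto
      moreover have "(K + 1) * (e / (2 * (K + 1))) = e / 2"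
      proof -
        have "K + 1 \<noteq> 0" "2 * K + 2 \<noteq> 0" using K_nonneg by auto
        thus ?thesis by (simp add: field_simps)
      qed
      ultimately show ?thesis by linarith
    qed
    also have "K2 / b * M < e / 2"
    proof -
      have "2 * K2 * M / e < b" using b unfolding b0_def by auto
      hence "2 * K2 * M < b * e" using e by (simp add: field_simps)
      thus ?thesis using bpos by (simp add: field_simps)
    qed
    finally show "dist (integral\<^sup>L (Mw \<mu> w) (cI (fst (a, b)) (snd (a, b)))) (integral\<^sup>L (Mw \<mu> w) c) < e"
      by simp
  qed
qed

lemma Jab_lim: "((\<lambda>p. Jab (fst p) (snd p) u v) \<longlongrightarrow> Jinf u v) (at_right 0 \<times>\<^sub>F at_top)"
  unfolding Jab_def Jinf_def pol_def by (intro tendsto_intros w_lim) simp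

lemma has_mu: "has_mu_integral \<mu> (\<lambda>t B. c t * cinner u (B v)) (Jinf u v)"
  unfolding has_mu_integral_def
proof (intro conjI allI impI)
  fix a b :: real assume "0 < a" "a < b"
  thus "convergent (rs_sum \<mu> (\<lambda>t B. c t * cinner u (B v)) a b)"
    using rs_conv[OF \<open>0 < a\<close> \<open>a < b\<close>, of u v] by (auto simp: convergent_def)
next
  have ev: "eventually (\<lambda>p. (\<lambda>(a, b). rs_on \<mu> (\<lambda>t B. c t * cinner u (B v)) a b) p = Jab (fst p) (snd p) u v)
      (at_right 0 \<times>\<^sub>F at_top)"
    unfolding eventually_prod_filter
  proof (intro exI conjI allI impI)
    show "eventually (\<lambda>a. a \<in> {0<..<1}) (at_right (0::real))" by (rule eventually_at_right_real) simp
    show "eventually (\<lambda>b. 1 < b) (at_top::real filter)" by simp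
    fix a b :: real assume "a \<in> {0<..<1}" "1 < b"
    hence ab: "0 < a" "a < b" by auto
    show "(\<lambda>(a, b). rs_on \<mu> (\<lambda>t B. c t * cinner u (B v)) a b) (a, b) = Jab (fst (a, b)) (snd (a, b)) u v"
      using limI[OF rs_conv[OF ab]] by (simp add: rs_on_def)
  qed
  show "((\<lambda>(a, b). rs_on \<mu> (\<lambda>t B. c t * cinner u (B v)) a b) \<longlongrightarrow> Jinf u v) (at_right 0 \<times>\<^sub>F at_top)"
    using tendsto_cong[OF ev] Jab_lim[of u v] by blast
qed

end


lemma bl_cinner: "bounded_linear (cinner (u::'a::chilbert_space))"
proof (rule bounded_linear_intro[where K = "norm u"])
  show "cinner u (x + y) = cinner u x + cinner u y" for x y by (rule cinner_add_right)
  show "cinner u (r *\<^sub>R x) = r *\<^sub>R cinner u x" for r x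
    by (simp add: cinner_scaleR_right scaleR_conv_of_real)
  show "norm (cinner u x) \<le> norm x * norm u" for x
    using cauchy_schwarz[of u x] by (simp add: mult.commute)
qed

lemma bl_scaleC: "bounded_linear (scaleC a :: 'a::chilbert_space \<Rightarrow> 'a)"
proof (rule bounded_linear_intro[where K = "cmod a"])
  show "scaleC a (x + y) = scaleC a x + scaleC a y" for x y :: 'a by (rule scaleC_add_right)
  show "scaleC a (r *\<^sub>R x) = r *\<^sub>R scaleC a x" for r and x :: 'a
    by (simp add: scaleR_scaleC scaleC_scaleC mult.commute)
  show "norm (scaleC a x) \<le> norm x * cmod a" for x :: 'a unfolding norm_scaleC by (simp add: mult.commute)
qed

lemma pol_diff: "pol u v (\<lambda>w. f w - g w) = pol u v f - pol u v g"
  unfolding pol_def by (simp add: field_simps)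

lemma sq_sum_le: "(a + b)\<^sup>2 \<le> 2 * a\<^sup>2 + 2 * (b::real)\<^sup>2"
proof -
  have "0 \<le> (a - b)\<^sup>2" by simp
  thus ?thesis unfolding power2_sum power2_diff by linarith
qed

lemma pol_bound:
  fixes u v :: "'a::chilbert_space"
  assumes D: "0 \<le> D" and b: "\<And>w. cmod (\<phi> w) \<le> D * (norm w)\<^sup>2"
  shows "cmod (pol u v \<phi>) \<le> 2 * D * ((norm u)\<^sup>2 + (norm v)\<^sup>2)"
proof -
  have nv: "norm (scaleC \<i> v) = norm v" by (simp add: norm_scaleC)
  have t: "cmod (\<phi> x) \<le> D * (2 * (norm u)\<^sup>2 + 2 * (norm v)\<^sup>2)"
    if "norm x \<le> norm u + norm v" for x
  proof -
    have "(norm x)\<^sup>2 \<le> (norm u + norm v)\<^sup>2" using that by (intro power_mono) auto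
    also have "\<dots> \<le> 2 * (norm u)\<^sup>2 + 2 * (norm v)\<^sup>2" by (rule sq_sum_le)
    finally have "D * (norm x)\<^sup>2 \<le> D * (2 * (norm u)\<^sup>2 + 2 * (norm v)\<^sup>2)" using D by (rule mult_left_mono)
    thus ?thesis using b[of x] by linarith
  qed
  have t1: "cmod (\<phi> (u + v)) \<le> D * (2 * (norm u)\<^sup>2 + 2 * (norm v)\<^sup>2)" by (rule t, rule norm_triangle_ineq)
  have t2: "cmod (\<phi> (u - v)) \<le> D * (2 * (norm u)\<^sup>2 + 2 * (norm v)\<^sup>2)" by (rule t, rule norm_triangle_ineq4)
  have t3: "cmod (\<phi> (u + scaleC \<i> v)) \<le> D * (2 * (norm u)\<^sup>2 + 2 * (norm v)\<^sup>2)"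
    by (rule t) (metis nv norm_triangle_ineq)
  have t4: "cmod (\<phi> (u - scaleC \<i> v)) \<le> D * (2 * (norm u)\<^sup>2 + 2 * (norm v)\<^sup>2)"
    by (rule t) (metis nv norm_triangle_ineq4)
  have "cmod (pol u v \<phi>) \<le> (cmod (\<phi> (u + v)) + cmod (\<phi> (u - v)) + cmod (\<phi> (u + scaleC \<i> v))
      + cmod (\<phi> (u - scaleC \<i> v))) / 4"
  proof -
    have "cmod (\<phi> (u + v) - \<phi> (u - v) - \<i> * \<phi> (u + scaleC \<i> v) + \<i> * \<phi> (u - scaleC \<i> v))
      \<le> cmod (\<phi> (u + v)) + cmod (\<phi> (u - v)) + cmod (\<i> * \<phi> (u + scaleC \<i> v))
      + cmod (\<i> * \<phi> (u - scaleC \<i> v))"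
      by (smt (verit) norm_triangle_ineq norm_triangle_ineq4)
    thus ?thesis unfolding pol_def by (simp add: norm_mult norm_divide)
  qed
  also have "\<dots> \<le> 2 * D * ((norm u)\<^sup>2 + (norm v)\<^sup>2)" using t1 t2 t3 t4 by (simp add: algebra_simps)
  finally show ?thesis .
qed

context kern begin

definition CM :: real where
  "CM = (SOME C. C > 0 \<and> (\<forall>w. measure (Mw \<mu> w) UNIV \<le> C * (norm w)\<^sup>2))"

lemma CM: "CM > 0" "measure (Mw \<mu> w) UNIV \<le> CM * (norm w)\<^sup>2"
  using someI_ex[OF Mw_UNIV_bound] unfolding CM_def[symmetric] by auto

definition hN :: "nat \<Rightarrow> real" where "hN n = 1 / real (Suc n)"
definition NN :: "nat \<Rightarrow> nat" where "NN n = (Suc n)\<^sup>2"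
definition \<delta> :: "nat \<Rightarrow> real" where "\<delta> n = (L + K2) / real (Suc n)"
definition Sn :: "nat \<Rightarrow> 'a \<Rightarrow> 'a" where "Sn n v = Sop \<mu> c 0 (hN n) (NN n) v"

lemma hN_pos: "hN n > 0" unfolding hN_def by simp

lemma delta_nonneg: "0 \<le> \<delta> n" unfolding \<delta>_def using L_nonneg K2_nonneg by simp

lemma delta_lim: "\<delta> \<longlonglongrightarrow> 0"
proof -
  have "(\<lambda>n. (L + K2) / real n) \<longlonglongrightarrow> 0" by (rule lim_const_over_n)
  hence "(\<lambda>n. (L + K2) / real (Suc n)) \<longlonglongrightarrow> 0" by (rule LIMSEQ_Suc)
  thus ?thesis unfolding \<delta>_def[abs_def] .
qed

lemma stp_c_bound:
  assumes t: "t > 0"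
  shows "cmod (stp c 0 (hN n) (NN n) t - c t) \<le> \<delta> n"
proof -
  have e: "0 + real (NN n) * hN n = real (Suc n)"
  proof -
    have s: "real (NN n) = real (Suc n) ^ 2" unfolding NN_def by (simp only: of_nat_power)
    have "real (Suc n) ^ 2 * (1 / real (Suc n)) = real (Suc n)"
      by (simp add: power2_eq_square del: of_nat_Suc)
    thus ?thesis unfolding s hN_def by simp
  qed
  have sb: "cmod (stp c 0 (hN n) (NN n) t - c t * of_real (indicator {0..<real (Suc n)} t)) \<le> L * hN n"
    using stp_bound[OF hN_pos[of n], of 0 "NN n" t] unfolding e .
  show ?thesis
  proof (cases "t < real (Suc n)")
    case True
    hence "cmod (stp c 0 (hN n) (NN n) t - c t) \<le> L * hN n" using sb t by simp
    also have "\<dots> \<le> \<delta> n" unfolding \<delta>_def hN_def using K2_nonneg by (simp add: divide_right_mono)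
    finally show ?thesis .
  next
    case False
    hence s: "cmod (stp c 0 (hN n) (NN n) t) \<le> L * hN n" using sb by simp
    have "cmod (c t) \<le> K2 / t" using t by (rule tail)
    also have "\<dots> \<le> K2 / real (Suc n)" using False K2_nonneg by (intro divide_left_mono) auto
    finally have "cmod (stp c 0 (hN n) (NN n) t) + cmod (c t) \<le> \<delta> n"
      using s unfolding \<delta>_def hN_def by (simp add: add_divide_distrib)
    thus ?thesis using norm_triangle_ineq4[of "stp c 0 (hN n) (NN n) t" "c t"] by linarith
  qed
qed

lemma int_conv_bound:
  "cmod (integral\<^sup>L (Mw \<mu> w) (stp c 0 (hN n) (NN n)) - integral\<^sup>L (Mw \<mu> w) c)
     \<le> \<delta> n * measure (Mw \<mu> w) UNIV"
proof -
  have "integral\<^sup>L (Mw \<mu> w) (stp c 0 (hN n) (NN n)) - integral\<^sup>L (Mw \<mu> w) c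
      = integral\<^sup>L (Mw \<mu> w) (\<lambda>t. stp c 0 (hN n) (NN n) t - c t)"
    using integrable_stp[OF hN_pos] integrable_c by simp
  also have "cmod \<dots> \<le> \<delta> n * measure (Mw \<mu> w) UNIV"
  proof (rule int_bound)
    fix t :: real assume "t > 0"
    thus "cmod (stp c 0 (hN n) (NN n) t - c t) \<le> \<delta> n" by (rule stp_c_bound)
  qed measurable
  finally show ?thesis .
qed

lemma int_conv: "(\<lambda>n. integral\<^sup>L (Mw \<mu> w) (stp c 0 (hN n) (NN n))) \<longlonglongrightarrow> integral\<^sup>L (Mw \<mu> w) c"
proof -
  have l0: "(\<lambda>n. \<delta> n * measure (Mw \<mu> w) UNIV) \<longlonglongrightarrow> 0 * measure (Mw \<mu> w) UNIV"
    by (intro tendsto_intros delta_lim)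
  have ae: "\<forall>n. norm (integral\<^sup>L (Mw \<mu> w) (stp c 0 (hN n) (NN n)) - integral\<^sup>L (Mw \<mu> w) c)
       \<le> \<delta> n * measure (Mw \<mu> w) UNIV" by (rule allI, rule int_conv_bound)
  have "(\<lambda>n. integral\<^sup>L (Mw \<mu> w) (stp c 0 (hN n) (NN n)) - integral\<^sup>L (Mw \<mu> w) c) \<longlonglongrightarrow> 0"
    using l0 by (intro Lim_null_comparison[OF always_eventually[OF ae]]) simp
  thus ?thesis by (simp add: LIM_zero_iff)
qed

lemma cinner_Sn: "cinner u (Sn n v) = pol u v (\<lambda>w. integral\<^sup>L (Mw \<mu> w) (stp c 0 (hN n) (NN n)))"
  unfolding Sn_def by (rule cinner_Sop)

lemma cinner_Sn_diff:
  "cmod (cinner y (Sn n v - Sn m v)) \<le> 2 * ((\<delta> n + \<delta> m) * CM) * ((norm y)\<^sup>2 + (norm v)\<^sup>2)"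
proof -
  have "cinner y (Sn n v - Sn m v) = pol y v (\<lambda>w. integral\<^sup>L (Mw \<mu> w) (stp c 0 (hN n) (NN n))
        - integral\<^sup>L (Mw \<mu> w) (stp c 0 (hN m) (NN m)))"
    unfolding cinner_diff_right cinner_Sn pol_diff ..
  also have "cmod \<dots> \<le> 2 * ((\<delta> n + \<delta> m) * CM) * ((norm y)\<^sup>2 + (norm v)\<^sup>2)"
  proof (rule pol_bound)
    show "0 \<le> (\<delta> n + \<delta> m) * CM" using delta_nonneg CM(1) by simp
    fix w
    have "cmod (integral\<^sup>L (Mw \<mu> w) (stp c 0 (hN n) (NN n)) - integral\<^sup>L (Mw \<mu> w) (stp c 0 (hN m) (NN m)))
        \<le> cmod (integral\<^sup>L (Mw \<mu> w) (stp c 0 (hN n) (NN n)) - integral\<^sup>L (Mw \<mu> w) c)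
          + cmod (integral\<^sup>L (Mw \<mu> w) (stp c 0 (hN m) (NN m)) - integral\<^sup>L (Mw \<mu> w) c)"
    proof -
      let ?A = "integral\<^sup>L (Mw \<mu> w) (stp c 0 (hN n) (NN n))"
      let ?B = "integral\<^sup>L (Mw \<mu> w) (stp c 0 (hN m) (NN m))"
      let ?C = "integral\<^sup>L (Mw \<mu> w) c"
      have "?A - ?B = (?A - ?C) - (?B - ?C)" by simp
      thus ?thesis using norm_triangle_ineq4[of "?A - ?C" "?B - ?C"] by simp
    qed
    also have "\<dots> \<le> \<delta> n * measure (Mw \<mu> w) UNIV + \<delta> m * measure (Mw \<mu> w) UNIV"
      by (intro add_mono int_conv_bound)
    also have "\<dots> = (\<delta> n + \<delta> m) * measure (Mw \<mu> w) UNIV" by (simp add: algebra_simps)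
    also have "\<dots> \<le> (\<delta> n + \<delta> m) * (CM * (norm w)\<^sup>2)"
      using delta_nonneg CM(2) by (intro mult_left_mono) (auto simp: add_nonneg_nonneg)
    finally show "cmod (integral\<^sup>L (Mw \<mu> w) (stp c 0 (hN n) (NN n)) - integral\<^sup>L (Mw \<mu> w) (stp c 0 (hN m) (NN m)))
        \<le> (\<delta> n + \<delta> m) * CM * (norm w)\<^sup>2" by (simp add: mult.assoc)
  qed
  finally show ?thesis .
qed

end


context kern begin

lemma Sn_cauchy: "Cauchy (\<lambda>n. Sn n v)"
  unfolding Cauchy_def
proof (intro allI impI)
  fix e :: real assume e: "0 < e"
  define V where "V = (norm v)\<^sup>2"
  have V0: "0 \<le> V" unfolding V_def by simp
  define \<rho> where "\<rho> = min (1 / (8 * CM)) (e\<^sup>2 / (8 * CM * (V + 1)))"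
  have CM0: "CM > 0" by (rule CM(1))
  have \<rho>0: "\<rho> > 0" unfolding \<rho>_def using CM0 e V0 by simp
  have \<rho>1: "CM * \<rho> \<le> 1 / 8"
  proof -
    have "CM * \<rho> \<le> CM * (1 / (8 * CM))" unfolding \<rho>_def using CM0 by (intro mult_left_mono) auto
    thus ?thesis using CM0 by simp
  qed
  have \<rho>2: "8 * (CM * \<rho>) * (V + 1) \<le> e\<^sup>2"
  proof -
    have "CM * \<rho> \<le> CM * (e\<^sup>2 / (8 * CM * (V + 1)))" unfolding \<rho>_def using CM0 by (intro mult_left_mono) auto
    also have "\<dots> = e\<^sup>2 / (8 * (V + 1))" using CM0 by simp
    finally have "CM * \<rho> \<le> e\<^sup>2 / (8 * (V + 1))" .
    thus ?thesis using V0 by (simp add: field_simps)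
  qed
  have P0: "CM * \<rho> > 0" using CM0 \<rho>0 by simp
  obtain N0 where N0: "\<And>n. n \<ge> N0 \<Longrightarrow> \<delta> n < \<rho>"
    using order_tendstoD(2)[OF delta_lim \<rho>0] by (auto simp: eventually_sequentially)
  show "\<exists>M. \<forall>m\<ge>M. \<forall>n\<ge>M. dist (Sn m v) (Sn n v) < e"
  proof (intro exI allI impI)
    fix m n assume m: "N0 \<le> m" and n: "N0 \<le> n"
    define y where "y = Sn m v - Sn n v"
    define Y where "Y = (norm y)\<^sup>2"
    define r where "r = 2 * ((\<delta> m + \<delta> n) * CM)"
    have r0: "0 \<le> r" unfolding r_def using delta_nonneg CM0 by simp
    have rle: "r \<le> 4 * (CM * \<rho>)"
    proof -
      have "\<delta> m + \<delta> n \<le> 2 * \<rho>" using N0[OF m] N0[OF n] by simp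
      hence "(\<delta> m + \<delta> n) * CM \<le> (2 * \<rho>) * CM" using CM0 by (intro mult_right_mono) auto
      thus ?thesis unfolding r_def by (simp add: algebra_simps)
    qed
    have Yle: "Y \<le> r * (Y + V)"
    proof -
      have "Y = Re (cinner y y)" unfolding Y_def by (rule norm_sq_Re)
      also have "\<dots> \<le> cmod (cinner y y)" by (rule complex_Re_le_cmod)
      also have "\<dots> \<le> r * (Y + V)" unfolding y_def Y_def V_def r_def
        by (rule cinner_Sn_diff)
      finally show ?thesis .
    qed
    have rY: "r * Y \<le> Y / 2"
    proof -
      have "r \<le> 1 / 2" using rle \<rho>1 by simp
      hence "r * Y \<le> (1 / 2) * Y" unfolding Y_def by (intro mult_right_mono) auto
      thus ?thesis by simp
    qed
    have "Y \<le> 2 * r * V" using Yle rY by (simp add: algebra_simps)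
    also have "\<dots> \<le> 8 * (CM * \<rho>) * V"
    proof -
      have "2 * r \<le> 8 * (CM * \<rho>)" using rle by linarith
      thus ?thesis by (rule mult_right_mono[OF _ V0])
    qed
    also have "\<dots> < e\<^sup>2" using \<rho>2 P0 by (simp add: algebra_simps)
    finally have "(norm y)\<^sup>2 < e\<^sup>2" unfolding Y_def .
    hence "norm y < e" using e by (simp add: power_less_imp_less_base)
    thus "dist (Sn m v) (Sn n v) < e" unfolding y_def by (simp add: dist_norm)
  qed
qed

definition Top :: "'a \<Rightarrow> 'a" where "Top v = lim (\<lambda>n. Sn n v)"

lemma Top_lim: "(\<lambda>n. Sn n v) \<longlonglongrightarrow> Top v"
  unfolding Top_def using Sn_cauchy[of v] by (simp add: Cauchy_convergent_iff convergent_LIMSEQ_iff)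

lemma cinner_Top: "cinner u (Top v) = Jinf u v"
proof -
  have a: "(\<lambda>n. cinner u (Sn n v)) \<longlonglongrightarrow> cinner u (Top v)"
    by (rule bounded_linear.tendsto[OF bl_cinner Top_lim])
  have b: "(\<lambda>n. cinner u (Sn n v)) \<longlonglongrightarrow> Jinf u v"
    unfolding cinner_Sn Jinf_def pol_def by (intro tendsto_intros int_conv) simp
  show ?thesis using LIMSEQ_unique[OF a b] .
qed

lemma Sn_add: "Sn n (x + y) = Sn n x + Sn n y"
  unfolding Sn_def Sop_def
  using linear_add[OF bounded_linear.linear[OF pos_op_clinear(1)[OF pos Iv_borel]]]
  by (simp add: scaleC_add_right sum.distrib)

lemma Sn_scaleC: "Sn n (scaleC a x) = scaleC a (Sn n x)"
  unfolding Sn_def Sop_def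
  using pos_op_clinear(2)[OF pos Iv_borel]
  by (simp add: scaleC_sum_right scaleC_scaleC mult.commute)

lemma Top_add: "Top (x + y) = Top x + Top y"
  using LIMSEQ_unique[OF Top_lim[of "x + y", unfolded Sn_add] tendsto_add[OF Top_lim Top_lim]] .

lemma Top_scaleC: "Top (scaleC a x) = scaleC a (Top x)"
  using LIMSEQ_unique[OF Top_lim[of "scaleC a x", unfolded Sn_scaleC]
      bounded_linear.tendsto[OF bl_scaleC Top_lim]] .

lemma Top_scaleR: "Top (scaleR r x) = scaleR r (Top x)"
  using Top_scaleC[of "complex_of_real r" x] by (simp add: scaleC_of_real)

lemma Jinf_bound: "cmod (Jinf y v) \<le> 2 * (K * CM) * ((norm y)\<^sup>2 + (norm v)\<^sup>2)"
  unfolding Jinf_def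
proof (rule pol_bound)
  show "0 \<le> K * CM" using K_nonneg CM(1) by simp
  fix w
  have "cmod (integral\<^sup>L (Mw \<mu> w) c) \<le> K * measure (Mw \<mu> w) UNIV"
    by (rule int_bound[OF c_meas bnd])
  also have "\<dots> \<le> K * (CM * (norm w)\<^sup>2)" using K_nonneg CM(2) by (rule mult_left_mono[rotated])
  finally show "cmod (integral\<^sup>L (Mw \<mu> w) c) \<le> K * CM * (norm w)\<^sup>2" by (simp add: mult.assoc)
qed

lemma Top_zero: "Top 0 = 0"
  using Top_scaleC[of 0 0] by simp

lemma Top_bound: "norm (Top v) \<le> norm v * (4 * K * CM)"
proof (cases "Top v = 0")
  case True thus ?thesis using K_nonneg CM(1) by simp
next
  case False
  hence v0: "v \<noteq> 0" using Top_zero by auto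
  define v' where "v' = scaleR (1 / norm v) v"
  define z where "z = Top v'"
  have z: "z = scaleR (1 / norm v) (Top v)" unfolding z_def v'_def by (rule Top_scaleR)
  have nz: "norm z = norm (Top v) / norm v" unfolding z by simp
  have z0: "z \<noteq> 0" using False v0 unfolding z by simp
  define y where "y = scaleR (1 / norm z) z"
  have ny: "norm y = 1" unfolding y_def using z0 by simp
  have nv': "norm v' = 1" unfolding v'_def using v0 by simp
  have "cinner y z = of_real (1 / norm z) * cinner z z" unfolding y_def by (rule cinner_scaleR_left)
  also have "\<dots> = of_real (norm z)" using z0 by (simp add: cinner_self power2_eq_square)
  finally have "norm z = cmod (cinner y z)" by simp
  also have "\<dots> = cmod (Jinf y v')" unfolding z_def cinner_Top ..
  also have "\<dots> \<le> 2 * (K * CM) * ((norm y)\<^sup>2 + (norm v')\<^sup>2)" by (rule Jinf_bound)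
  also have "\<dots> = 4 * K * CM" unfolding ny nv' by simp
  finally have "norm (Top v) / norm v \<le> 4 * K * CM" unfolding nz .
  thus ?thesis using v0 by (simp add: field_simps)
qed

lemma Top_bcl: "bounded_clinear_op Top"
  unfolding bounded_clinear_op_def
proof (intro conjI allI)
  show "bounded_linear Top"
    by (rule bounded_linear_intro[where K = "4 * K * CM"]) (rule Top_add, rule Top_scaleR, rule Top_bound)
  show "Top (scaleC a x) = scaleC a (Top x)" for a x by (rule Top_scaleC)
qed

lemma Top_has_mu: "has_mu_integral \<mu> (\<lambda>t B. c t * cinner u (B v)) (cinner u (Top v))"
  unfolding cinner_Top by (rule has_mu)

lemma Top_pos:
  assumes s: "\<And>t. 0 \<le> \<sigma> * Im (c t)"
  shows "0 \<le> \<sigma> * Im (cinner v (Top v))"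
proof -
  have "(\<lambda>n. \<sigma> * Im (cinner v (Sn n v))) \<longlonglongrightarrow> \<sigma> * Im (cinner v (Top v))"
    by (intro tendsto_intros bounded_linear.tendsto[OF bl_cinner Top_lim])
  moreover have "0 \<le> \<sigma> * Im (cinner v (Sn n v))" for n
  proof -
    have "cinner v (Sn n v) = (\<Sum>j<NN n. c (0 + real j * hN n) *
        of_real (measure (Mw \<mu> v) (Iv 0 (hN n) j)))"
      unfolding Sn_def Sop_def
      by (simp add: cinner_sum_right cinner_scaleC_right cinner_mu_self[OF pos Iv_borel])
    hence "\<sigma> * Im (cinner v (Sn n v)) = (\<Sum>j<NN n. (\<sigma> * Im (c (0 + real j * hN n))) *
        measure (Mw \<mu> v) (Iv 0 (hN n) j))"
      by (simp add: sum_distrib_left mult.assoc)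
    also have "\<dots> \<ge> 0"
    proof (intro sum_nonneg)
      fix j show "0 \<le> \<sigma> * Im (c (0 + real j * hN n)) * measure (Mw \<mu> v) (Iv 0 (hN n) j)"
        by (rule mult_nonneg_nonneg[OF s]) simp
    qed
    finally show ?thesis .
  qed
  ultimately show ?thesis by (intro LIMSEQ_le_const) auto
qed

end


lemma cmod_ge_x: "\<bar>x\<bar> \<le> cmod (complex_of_real t - \<i> * complex_of_real x)"
  using abs_Im_le_cmod[of "complex_of_real t - \<i> * complex_of_real x"] by simp

lemma cmod_ge_t: "\<bar>t\<bar> \<le> cmod (complex_of_real t - \<i> * complex_of_real x)"
  using abs_Re_le_cmod[of "complex_of_real t - \<i> * complex_of_real x"] by simp

lemma denom_nz: "x \<noteq> 0 \<Longrightarrow> complex_of_real t - \<i> * complex_of_real x \<noteq> 0"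
  using cmod_ge_x[of x t] by auto

lemma real_part_lip: "\<bar>s / (1 + s\<^sup>2) - t / (1 + t\<^sup>2)\<bar> \<le> \<bar>s - (t::real)\<bar>"
proof -
  have ps: "1 + s\<^sup>2 > 0" "1 + t\<^sup>2 > 0" by (simp_all add: add_pos_nonneg)
  have eq: "s / (1 + s\<^sup>2) - t / (1 + t\<^sup>2) = (s - t) * (1 - s * t) / ((1 + s\<^sup>2) * (1 + t\<^sup>2))"
    using ps by (simp add: field_simps power2_eq_square)
  have st: "2 * \<bar>s * t\<bar> \<le> s\<^sup>2 + t\<^sup>2"
  proof -
    have "0 \<le> (\<bar>s\<bar> - \<bar>t\<bar>)\<^sup>2" by simp
    thus ?thesis unfolding power2_diff by (simp add: abs_mult power2_abs)
  qed
  have z: "0 \<le> s\<^sup>2 * t\<^sup>2" by simp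
  have ex: "(1 + s\<^sup>2) * (1 + t\<^sup>2) = 1 + s\<^sup>2 + t\<^sup>2 + s\<^sup>2 * t\<^sup>2" by (simp add: algebra_simps)
  have tr: "\<bar>1 - s * t\<bar> \<le> \<bar>1\<bar> + \<bar>s * t\<bar>" by (rule abs_triangle_ineq4)
  have b: "\<bar>1 - s * t\<bar> \<le> (1 + s\<^sup>2) * (1 + t\<^sup>2)"
    unfolding ex using z st tr abs_ge_zero[of "s*t"] by linarith
  have "\<bar>s / (1 + s\<^sup>2) - t / (1 + t\<^sup>2)\<bar> = \<bar>s - t\<bar> * (\<bar>1 - s * t\<bar> / ((1 + s\<^sup>2) * (1 + t\<^sup>2)))"
    unfolding eq using ps by (simp add: abs_mult abs_divide)
  also have "\<dots> \<le> \<bar>s - t\<bar> * 1"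
    using b ps by (intro mult_left_mono) (auto simp: divide_le_eq)
  finally show ?thesis by simp
qed

lemma real_part_bound: "\<bar>t / (1 + t\<^sup>2)\<bar> \<le> (1::real)"
proof -
  have p: "1 + t\<^sup>2 > 0" by (simp add: add_pos_nonneg)
  have "\<bar>t\<bar> \<le> 1 + t\<^sup>2"
  proof (cases "\<bar>t\<bar> \<le> 1")
    case True thus ?thesis by (smt (verit) zero_le_power2)
  next
    case False
    hence "\<bar>t\<bar> \<le> \<bar>t\<bar> * \<bar>t\<bar>" by (intro mult_le_cancel_left1[THEN iffD2]) auto
    thus ?thesis by (simp add: power2_eq_square abs_mult[symmetric])
  qed
  thus ?thesis using p by (simp add: abs_divide divide_le_eq)
qed

lemma real_part_tail: "t > 0 \<Longrightarrow> \<bar>t / (1 + t\<^sup>2)\<bar> \<le> 1 / (t::real)"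
proof -
  assume t: "t > 0"
  have p: "1 + t\<^sup>2 > 0" by (simp add: add_pos_nonneg)
  have "t * t \<le> 1 + t\<^sup>2" by (simp add: power2_eq_square)
  thus ?thesis using t p by (simp add: abs_divide field_simps)
qed

lemma N_kernel_lip:
  assumes x: "x \<noteq> 0"
  shows "cmod (N_kernel (complex_of_real x) s - N_kernel (complex_of_real x) t) \<le> (1 / x\<^sup>2 + 1) * \<bar>s - t\<bar>"
proof -
  define a where "a = complex_of_real s - \<i> * complex_of_real x"
  define b where "b = complex_of_real t - \<i> * complex_of_real x"
  have a0: "a \<noteq> 0" and b0: "b \<noteq> 0" unfolding a_def b_def using denom_nz[OF x] by auto
  have ax: "\<bar>x\<bar> \<le> cmod a" and bx: "\<bar>x\<bar> \<le> cmod b" unfolding a_def b_def by (rule cmod_ge_x)+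
  have e1: "1 / a - 1 / b = (b - a) / (a * b)" using a0 b0 by (simp add: field_simps)
  have "b - a = complex_of_real (t - s)" unfolding a_def b_def by simp
  hence e2: "cmod (b - a) = \<bar>t - s\<bar>" by (simp only: norm_of_real)
  have d: "cmod (1 / a - 1 / b) = \<bar>t - s\<bar> / (cmod a * cmod b)"
    unfolding e1 norm_divide norm_mult e2 ..
  have "\<bar>t - s\<bar> / (cmod a * cmod b) \<le> \<bar>t - s\<bar> / (\<bar>x\<bar> * \<bar>x\<bar>)"
  proof -
    have x0: "0 < \<bar>x\<bar>" using x by simp
    show ?thesis using ax bx x0 by (intro divide_left_mono mult_mono mult_pos_pos) auto
  qed
  also have "\<dots> = 1 / x\<^sup>2 * \<bar>s - t\<bar>" by (simp add: power2_eq_square abs_minus_commute)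
  finally have d1: "cmod (1 / a - 1 / b) \<le> 1 / x\<^sup>2 * \<bar>s - t\<bar>" unfolding d .
  have eq: "N_kernel (complex_of_real x) s - N_kernel (complex_of_real x) t =
      (1 / a - 1 / b) - complex_of_real (s / (1 + s\<^sup>2) - t / (1 + t\<^sup>2))"
    unfolding N_kernel_def a_def b_def by simp
  have tri: "cmod ((1 / a - 1 / b) - complex_of_real (s / (1 + s\<^sup>2) - t / (1 + t\<^sup>2)))
      \<le> cmod (1 / a - 1 / b) + cmod (complex_of_real (s / (1 + s\<^sup>2) - t / (1 + t\<^sup>2)))"
    by (rule norm_triangle_ineq4)
  have nr: "cmod (complex_of_real (s / (1 + s\<^sup>2) - t / (1 + t\<^sup>2))) = \<bar>s / (1 + s\<^sup>2) - t / (1 + t\<^sup>2)\<bar>"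
    by (rule norm_of_real)
  have "(1 / x\<^sup>2 + 1) * \<bar>s - t\<bar> = 1 / x\<^sup>2 * \<bar>s - t\<bar> + \<bar>s - t\<bar>" by (simp add: algebra_simps)
  thus ?thesis unfolding eq using tri nr d1 real_part_lip[of s t] by linarith
qed

lemma N_kernel_bound:
  assumes x: "x \<noteq> 0"
  shows "cmod (N_kernel (complex_of_real x) t) \<le> 1 / \<bar>x\<bar> + 1"
proof -
  define b where "b = complex_of_real t - \<i> * complex_of_real x"
  have bx: "\<bar>x\<bar> \<le> cmod b" unfolding b_def by (rule cmod_ge_x)
  have x0: "0 < \<bar>x\<bar>" using x by simp
  have "1 / cmod b \<le> 1 / \<bar>x\<bar>" using bx x0 by (intro divide_left_mono mult_pos_pos) auto
  hence "cmod (1 / b) \<le> 1 / \<bar>x\<bar>" by (simp add: norm_divide)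
  moreover have eq: "N_kernel (complex_of_real x) t = 1 / b - complex_of_real (t / (1 + t\<^sup>2))"
    unfolding N_kernel_def b_def by simp
  moreover have "cmod (1 / b - complex_of_real (t / (1 + t\<^sup>2))) \<le> cmod (1 / b) + cmod (complex_of_real (t / (1 + t\<^sup>2)))"
    by (rule norm_triangle_ineq4)
  moreover have "cmod (complex_of_real (t / (1 + t\<^sup>2))) = \<bar>t / (1 + t\<^sup>2)\<bar>" by (rule norm_of_real)
  ultimately show ?thesis using real_part_bound[of t] unfolding eq by linarith
qed

lemma N_kernel_tail:
  assumes x: "x \<noteq> 0" and t: "t > 0"
  shows "cmod (N_kernel (complex_of_real x) t) \<le> 2 / t"
proof -
  define b where "b = complex_of_real t - \<i> * complex_of_real x"
  have bt: "t \<le> cmod b" unfolding b_def using cmod_ge_t[of t x] t by simp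
  have "1 / cmod b \<le> 1 / t" using bt t by (intro divide_left_mono mult_pos_pos) auto
  hence "cmod (1 / b) \<le> 1 / t" by (simp add: norm_divide)
  moreover have eq: "N_kernel (complex_of_real x) t = 1 / b - complex_of_real (t / (1 + t\<^sup>2))"
    unfolding N_kernel_def b_def by simp
  moreover have "cmod (1 / b - complex_of_real (t / (1 + t\<^sup>2))) \<le> cmod (1 / b) + cmod (complex_of_real (t / (1 + t\<^sup>2)))"
    by (rule norm_triangle_ineq4)
  moreover have "cmod (complex_of_real (t / (1 + t\<^sup>2))) = \<bar>t / (1 + t\<^sup>2)\<bar>" by (rule norm_of_real)
  moreover have "1 / t + 1 / t = 2 / t" by simp
  ultimately show ?thesis using real_part_tail[OF t] unfolding eq by linarith
qed

lemma N_kernel_cnj: "N_kernel (complex_of_real (- x)) t = cnj (N_kernel (complex_of_real x) t)"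
  unfolding N_kernel_def by simp

lemma N_kernel_Im:
  assumes x: "x \<noteq> 0"
  shows "0 \<le> sgn x * Im (N_kernel (complex_of_real x) t)"
proof -
  define b where "b = complex_of_real t - \<i> * complex_of_real x"
  have "Im (N_kernel (complex_of_real x) t) = Im (1 / b)" unfolding N_kernel_def b_def by simp
  also have "\<dots> = x / (cmod b)\<^sup>2" unfolding Im_divide' b_def by simp
  finally have "sgn x * Im (N_kernel (complex_of_real x) t) = \<bar>x\<bar> / (cmod b)\<^sup>2"
    using x by (cases "x > 0") (auto simp: sgn_if)
  thus ?thesis by simp
qed

lemma N_kernel_meas[measurable]: "(\<lambda>t. N_kernel z t / complex_of_real pi) \<in> borel_measurable borel"
  unfolding N_kernel_def by measurable


lemma Mw_scale:
  assumes pos: "pos_op_measure \<mu>" and z: "cmod z = 1"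
  shows "Mw \<mu> (scaleC z w) = Mw \<mu> w"
proof (rule measure_eqI)
  show "sets (Mw \<mu> (scaleC z w)) = sets (Mw \<mu> w)" by simp
  fix A assume "A \<in> sets (Mw \<mu> (scaleC z w))"
  hence A: "A \<in> sets borel" by simp
  have zz: "cnj z * z = 1" using z complex_norm_square[of z] by (simp add: mult.commute)
  have "cinner (scaleC z w) (\<mu> (A \<inter> {0<..}) (scaleC z w)) = cnj z * z * cinner w (\<mu> (A \<inter> {0<..}) w)"
    using pos_op_clinear(2)[OF pos A] by (simp add: cinner_scaleC_left cinner_scaleC_right)
  thus "emeasure (Mw \<mu> (scaleC z w)) A = emeasure (Mw \<mu> w) A"
    unfolding emeasure_Mw[OF pos A] zz by simp
qed

lemma pol_cnj:
  assumes pos: "pos_op_measure \<mu>"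
  shows "pol u v (\<lambda>w. integral\<^sup>L (Mw \<mu> w) (\<lambda>t. cnj (c t))) = cnj (pol v u (\<lambda>w. integral\<^sup>L (Mw \<mu> w) c))"
proof -
  have e1: "v - u = scaleC (-1) (u - v)"
    by (simp add: scaleC_diff_right scaleC_minus_left scaleC_one)
  have e2: "v + scaleC \<i> u = scaleC \<i> (u - scaleC \<i> v)"
    by (simp add: scaleC_diff_right scaleC_scaleC scaleC_minus_left scaleC_one)
  have e3: "v - scaleC \<i> u = scaleC (- \<i>) (u + scaleC \<i> v)"
    by (simp add: scaleC_add_right scaleC_scaleC scaleC_minus_left scaleC_one)
  have m1: "Mw \<mu> (v - u) = Mw \<mu> (u - v)" unfolding e1 by (rule Mw_scale[OF pos]) simp
  have m2: "Mw \<mu> (v + scaleC \<i> u) = Mw \<mu> (u - scaleC \<i> v)" unfolding e2 by (rule Mw_scale[OF pos]) simp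
  have m3: "Mw \<mu> (v - scaleC \<i> u) = Mw \<mu> (u + scaleC \<i> v)" unfolding e3 by (rule Mw_scale[OF pos]) simp
  have m0: "Mw \<mu> (v + u) = Mw \<mu> (u + v)" by (simp only: add.commute)
  have alg: "(cnj A - cnj B - \<i> * cnj C + \<i> * cnj D) / 4 = cnj ((A - B - \<i> * D + \<i> * C) / 4)" for A B C D
    by (simp add: field_simps)
  show ?thesis unfolding pol_def m0 m1 m2 m3 by (simp only: Bochner_Integration.integral_cnj alg)
qed

lemma cmod_div_pi: "cmod (z / complex_of_real pi) \<le> cmod z"
proof -
  have p1: "1 \<le> pi" using pi_gt3 by linarith
  have "cmod z * 1 \<le> cmod z * pi" using p1 by (intro mult_left_mono) auto
  hence "cmod z / pi \<le> cmod z" using pi_gt_zero by (simp add: pos_divide_le_eq)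
  thus ?thesis by (simp add: norm_divide)
qed

lemma kern_N:
  assumes pos: "pos_op_measure \<mu>" and x: "x \<noteq> 0"
  shows "kern \<mu> (\<lambda>t. N_kernel (complex_of_real x) t / complex_of_real pi) (1 / x\<^sup>2 + 1) (1 / \<bar>x\<bar> + 1) 2"
proof (unfold_locales)
  show "pos_op_measure \<mu>" by (rule pos)
  show "(\<lambda>t. N_kernel (complex_of_real x) t / complex_of_real pi) \<in> borel_measurable borel" by measurable
  fix s t :: real
  have "cmod (N_kernel (complex_of_real x) s / complex_of_real pi - N_kernel (complex_of_real x) t / complex_of_real pi)
      = cmod ((N_kernel (complex_of_real x) s - N_kernel (complex_of_real x) t) / complex_of_real pi)"
    by (simp add: diff_divide_distrib)
  also have "\<dots> \<le> cmod (N_kernel (complex_of_real x) s - N_kernel (complex_of_real x) t)" by (rule cmod_div_pi)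
  also have "\<dots> \<le> (1 / x\<^sup>2 + 1) * \<bar>s - t\<bar>" by (rule N_kernel_lip[OF x])
  finally show "cmod (N_kernel (complex_of_real x) s / complex_of_real pi - N_kernel (complex_of_real x) t / complex_of_real pi)
      \<le> (1 / x\<^sup>2 + 1) * \<bar>s - t\<bar>" .
  show "cmod (N_kernel (complex_of_real x) t / complex_of_real pi) \<le> 1 / \<bar>x\<bar> + 1"
    using order_trans[OF cmod_div_pi N_kernel_bound[OF x]] .
  assume "t > 0"
  show "cmod (N_kernel (complex_of_real x) t / complex_of_real pi) \<le> 2 / t"
    using order_trans[OF cmod_div_pi N_kernel_tail[OF x \<open>t > 0\<close>]] .
qed

context kern begin

lemma N_mu_Top:
  assumes cz: "c = (\<lambda>t. N_kernel z t / complex_of_real pi)"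
  shows "N_mu \<mu> z = Top"
  unfolding N_mu_def
proof (rule the_equality)
  have F: "(\<lambda>t B. N_kernel z t / complex_of_real pi * cinner u (B v)) = (\<lambda>t B. c t * cinner u (B v))" for u v
    using cz by simp
  show "bounded_clinear_op Top \<and> (\<forall>u v. has_mu_integral \<mu> (\<lambda>t B. N_kernel z t / complex_of_real pi * cinner u (B v))
      (cinner u (Top v)))"
    unfolding F using Top_bcl Top_has_mu by blast
  fix T assume T: "bounded_clinear_op T \<and> (\<forall>u v. has_mu_integral \<mu> (\<lambda>t B. N_kernel z t / complex_of_real pi * cinner u (B v))
      (cinner u (T v)))"
  show "T = Top"
  proof (rule ext, rule cinner_ext)
    fix v u
    have nb: "\<not> trivial_limit (at_right (0::real) \<times>\<^sub>F (at_top::real filter))"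
      by (simp add: prod_filter_eq_bot)
    have a: "((\<lambda>(a, b). rs_on \<mu> (\<lambda>t B. c t * cinner u (B v)) a b) \<longlongrightarrow> cinner u (T v)) (at_right 0 \<times>\<^sub>F at_top)"
      using T unfolding F has_mu_integral_def by blast
    have b: "((\<lambda>(a, b). rs_on \<mu> (\<lambda>t B. c t * cinner u (B v)) a b) \<longlongrightarrow> cinner u (Top v)) (at_right 0 \<times>\<^sub>F at_top)"
      using Top_has_mu[of u v] unfolding has_mu_integral_def by blast
    show "cinner u (T v) = cinner u (Top v)" by (rule tendsto_unique[OF nb a b])
  qed
qed

end


theorem lemma2p11:
  fixes \<mu> :: "real set \<Rightarrow> 'a::chilbert_space \<Rightarrow> 'a" and x :: real
  assumes "carleson_measure \<mu>" and "x \<noteq> 0"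
  shows "R_mu \<mu> (complex_of_real (- x)) = R_mu \<mu> (complex_of_real x)
    \<and> I_mu \<mu> (complex_of_real (- x)) = (\<lambda>v. - I_mu \<mu> (complex_of_real x) v)
    \<and> op_nonneg (\<lambda>v. scaleC (complex_of_real (sgn x)) (I_mu \<mu> (complex_of_real x) v))"
proof -
  have pos: "pos_op_measure \<mu>" using assms(1) unfolding carleson_measure_def by blast
  have x: "x \<noteq> 0" and mx: "- x \<noteq> 0" using assms(2) by auto
  define kx where "kx = (\<lambda>t. N_kernel (complex_of_real x) t / complex_of_real pi)"
  define km where "km = (\<lambda>t. N_kernel (complex_of_real (- x)) t / complex_of_real pi)"
  interpret A: kern \<mu> kx "1 / x\<^sup>2 + 1" "1 / \<bar>x\<bar> + 1" 2
    unfolding kx_def by (rule kern_N[OF pos x])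
  interpret B: kern \<mu> km "1 / (- x)\<^sup>2 + 1" "1 / \<bar>- x\<bar> + 1" 2
    unfolding km_def by (rule kern_N[OF pos mx])
  have NA: "N_mu \<mu> (complex_of_real x) = A.Top" by (rule A.N_mu_Top) (simp add: kx_def)
  have NB: "N_mu \<mu> (complex_of_real (- x)) = B.Top" by (rule B.N_mu_Top) (simp add: km_def)
  have kmc: "km = (\<lambda>t. cnj (kx t))" unfolding km_def kx_def N_kernel_cnj by simp
  have rel: "cinner (A.Top u) v = cinner u (B.Top v)" for u v
  proof -
    have "cinner u (B.Top v) = B.Jinf u v" by (rule B.cinner_Top)
    also have "\<dots> = pol u v (\<lambda>w. integral\<^sup>L (Mw \<mu> w) (\<lambda>t. cnj (kx t)))"
      unfolding B.Jinf_def by (simp only: kmc)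
    also have "\<dots> = cnj (pol v u (\<lambda>w. integral\<^sup>L (Mw \<mu> w) kx))" by (rule pol_cnj[OF pos])
    also have "pol v u (\<lambda>w. integral\<^sup>L (Mw \<mu> w) kx) = A.Jinf v u" unfolding A.Jinf_def ..
    also have "A.Jinf v u = cinner v (A.Top u)" by (rule A.cinner_Top[symmetric])
    also have "cnj (cinner v (A.Top u)) = cinner (A.Top u) v" by (rule cinner_commute[symmetric])
    finally show ?thesis ..
  qed
  have adjB: "adjoint_op B.Top = A.Top"
    unfolding adjoint_op_def
  proof (rule the_equality)
    show "\<forall>u v. cinner (A.Top u) v = cinner u (B.Top v)" using rel by blast
    fix S assume S: "\<forall>u v. cinner (S u) v = cinner u (B.Top v)"
    show "S = A.Top"
    proof (rule ext, rule cinner_ext_left)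
      fix u w show "cinner (S u) w = cinner (A.Top u) w" using S rel by simp
    qed
  qed
  have rel2: "cinner (B.Top u) v = cinner u (A.Top v)" for u v
    by (metis cinner_commute rel)
  have adjA: "adjoint_op A.Top = B.Top"
    unfolding adjoint_op_def
  proof (rule the_equality)
    show "\<forall>u v. cinner (B.Top u) v = cinner u (A.Top v)" using rel2 by blast
    fix S assume S: "\<forall>u v. cinner (S u) v = cinner u (A.Top v)"
    show "S = B.Top"
    proof (rule ext, rule cinner_ext_left)
      fix u w show "cinner (S u) w = cinner (B.Top u) w" using S rel2 by simp
    qed
  qed
  have R: "R_mu \<mu> (complex_of_real (- x)) = R_mu \<mu> (complex_of_real x)"
    unfolding R_mu_def NA NB adjA adjB by (simp add: add.commute)
  have I: "I_mu \<mu> (complex_of_real (- x)) = (\<lambda>v. - I_mu \<mu> (complex_of_real x) v)"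
    unfolding I_mu_def NA NB adjA adjB by (simp add: scaleC_minus_right[symmetric])
  have sg: "0 \<le> sgn x * Im (kx t)" for t
  proof -
    have "Im (kx t) = Im (N_kernel (complex_of_real x) t) / pi" unfolding kx_def by simp
    thus ?thesis using N_kernel_Im[OF x, of t] by (simp add: divide_nonneg_pos)
  qed
  have nn: "op_nonneg (\<lambda>v. scaleC (complex_of_real (sgn x)) (I_mu \<mu> (complex_of_real x) v))"
    unfolding op_nonneg_def
  proof (intro allI conjI)
    fix v
    define \<zeta> where "\<zeta> = cinner v (A.Top v)"
    have bv: "cinner v (B.Top v) = cnj \<zeta>" unfolding \<zeta>_def using rel[of v v] cinner_commute by metis
    have "cinner v (scaleC (complex_of_real (sgn x)) (I_mu \<mu> (complex_of_real x) v))
        = complex_of_real (sgn x) * (1 / (2 * \<i>) * (\<zeta> - cnj \<zeta>))"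
      unfolding I_mu_def NA adjA by (simp add: cinner_scaleC_right cinner_diff_right \<zeta>_def bv)
    also have "\<zeta> - cnj \<zeta> = complex_of_real (2 * Im \<zeta>) * \<i>" by (rule complex_diff_cnj)
    finally have e: "cinner v (scaleC (complex_of_real (sgn x)) (I_mu \<mu> (complex_of_real x) v))
        = complex_of_real (sgn x * Im \<zeta>)" by (simp add: algebra_simps)
    show "Im (cinner v (scaleC (complex_of_real (sgn x)) (I_mu \<mu> (complex_of_real x) v))) = 0"
      unfolding e by simp
    have "0 \<le> sgn x * Im \<zeta>" unfolding \<zeta>_def by (rule A.Top_pos[OF sg])
    thus "0 \<le> Re (cinner v (scaleC (complex_of_real (sgn x)) (I_mu \<mu> (complex_of_real x) v)))"
      unfolding e by simp
  qed
  show ?thesis using R I nn by blast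
qed


end
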